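(* The subspace $\textbf{I}_\textsf{P}$ is a homogeneous bi-ideal of $(\textbf{W}, \nabla_{\sqcup\!\sqcup}, \iota_{\sqcup\!\sqcup}, \Delta_\odot, \epsilon_\odot)$. The quotient bialgebra ${\textbf{W}}_\textsf{P} = \textbf{W} /\textbf{I}_\textsf{P}$ is a graded Hopf algebra.
   Context: Let $\Bbbk$ be a field. A word is a finite sequence of positive integers; $\ell(w)$ is its length. For a word $w=w_1\cdots w_m$ with $\max(w)\le n\in\mathbb{N}$, $[w,n]$ denotes the linear endomorphism of the shuffle algebra (span of all words) sending a word $v$ of length $n$ to $v_{w_1}\cdots v_{w_m}$ and other words to $0$; $\mathbb{W}$ is the set of all such $[w,n]$ and $\textbf{W}$ their span, graded by $\deg [w,n]=\ell(w)$. $\textbf{W}$ is a graded bialgebra with product $\nabla_{\sqcup\!\sqcup}([v,m]\otimes[w,n]) = [v\sqcup\!\sqcup (w\uparrow m), m+n]$ ($\sqcup\!\sqcup$ the shuffle product of words, $w\uparrow m$ adds $m$ to each letter), unit $\iota_{\sqcup\!\sqcup}(1)=[\emptyset,0]$, coproduct $\Delta_\odot([w,n])=\sum_{i=0}^m [w_1\cdots w_i,n]\otimes[w_{i+1}\cdots w_m,n]$ and counit $\epsilon_\odot([w,n])=1$ if $w=\emptyset$, else $0$. For a word $w$ whose set of letters $S$ has $m$ elements, $\operatorname{fl}(w)$ is obtained by applying the order-preserving bijection $S\to\{1,\dots,m\}$ to each letter. $\textbf{I}_\textsf{P}$ is the subspace of $\textbf{W}$ spanned by all differences $[v,m]-[w,n]$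 with $[v,m],[w,n]\in\mathbb{W}$ and $\operatorname{fl}(v)=\operatorname{fl}(w)$. *)

theory Defs
  imports Main "HOL-Library.Multiset" "HOL-Library.Function_Algebras"
begin

text \<open>Basis elements [w,n] of W are encoded as pairs (w,n) with w a word of
positive integers and max(w) \<le> n.  Vectors are finitely supported functions
from keys to the field.  Tensor products of free spaces are functions on
pairs of keys.\<close>

type_synonym key = "nat list \<times> nat"

definition Wbasis :: "key set" where
  "Wbasis = {(w, n). \<forall>a\<in>set w. 0 < a \<and> a \<le> n}"

definition deg :: "key \<Rightarrow> nat" where
  "deg b = length (fst b)"

definition supp :: "('a \<Rightarrow> 'k::zero) \<Rightarrow> 'a set" where
  "supp f = {x. f x \<noteq> 0}"

definition delta :: "'a \<Rightarrow> 'a \<Rightarrow> 'k::{zero,one}" where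
  "delta b = (\<lambda>c. if c = b then 1 else 0)"

definition smul :: "'k::times \<Rightarrow> ('a \<Rightarrow> 'k) \<Rightarrow> 'a \<Rightarrow> 'k" where
  "smul c f = (\<lambda>x. c * f x)"

definition lin :: "('a \<Rightarrow> 'b \<Rightarrow> 'k::semiring_0) \<Rightarrow> ('a \<Rightarrow> 'k) \<Rightarrow> 'b \<Rightarrow> 'k" where
  "lin F x = (\<lambda>c. \<Sum>b\<in>supp x. x b * F b c)"

definition Wsp :: "(key \<Rightarrow> 'k::field) set" where
  "Wsp = {f. finite (supp f) \<and> supp f \<subseteq> Wbasis}"

definition tens :: "('a \<Rightarrow> 'k::times) \<Rightarrow> ('b \<Rightarrow> 'k) \<Rightarrow> ('a \<times> 'b \<Rightarrow> 'k)" where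
  "tens x y = (\<lambda>(a, b). x a * y b)"

definition span_fun :: "('a \<Rightarrow> 'k::field) set \<Rightarrow> ('a \<Rightarrow> 'k) set" where
  "span_fun G = {x. \<exists>A c. finite A \<and> A \<subseteq> G \<and> x = (\<Sum>g\<in>A. smul (c g) g)}"

fun shuf :: "'a list \<Rightarrow> 'a list \<Rightarrow> 'a list multiset" where
  "shuf [] w = {#w#}"
| "shuf v [] = {#v#}"
| "shuf (a # v) (b # w) =
     image_mset ((#) a) (shuf v (b # w)) + image_mset ((#) b) (shuf (a # v) w)"

definition shift :: "nat \<Rightarrow> nat list \<Rightarrow> nat list" where
  "shift m w = map (\<lambda>a. a + m) w"

definition mu_b :: "key \<times> key \<Rightarrow> key \<Rightarrow> 'k::field" where
  "mu_b p = (case p of ((v, m), (w, n)) \<Rightarrow>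
     (\<lambda>(u, k). if k = m + n then of_nat (count (shuf v (shift m w)) u) else 0))"

definition nabla :: "(key \<times> key \<Rightarrow> 'k::field) \<Rightarrow> key \<Rightarrow> 'k" where
  "nabla z = lin mu_b z"

definition iota :: "'k::field \<Rightarrow> key \<Rightarrow> 'k" where
  "iota c = smul c (delta ([], 0))"

definition Delta_b :: "key \<Rightarrow> key \<times> key \<Rightarrow> 'k::field" where
  "Delta_b b = (case b of (w, n) \<Rightarrow>
     (\<Sum>i\<le>length w. delta ((take i w, n), (drop i w, n))))"

definition Delta :: "(key \<Rightarrow> 'k::field) \<Rightarrow> key \<times> key \<Rightarrow> 'k" where
  "Delta x = lin Delta_b x"

definition eps :: "(key \<Rightarrow> 'k::field) \<Rightarrow> 'k" where
  "eps x = (\<Sum>b\<in>supp x. x b * (if fst b = [] then 1 else 0))"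

text \<open>Standardization fl: the order-preserving bijection from the letter set S
to {1..|S|} sends a to the number of letters of S that are \<le> a.\<close>
definition fl :: "nat list \<Rightarrow> nat list" where
  "fl w = map (\<lambda>a. card {b \<in> set w. b \<le> a}) w"

definition I_P :: "(key \<Rightarrow> 'k::field) set" where
  "I_P = span_fun {delta (v, m) - delta (w, n) | v m w n.
                    (v, m) \<in> Wbasis \<and> (w, n) \<in> Wbasis \<and> fl v = fl w}"

definition proj_deg :: "nat \<Rightarrow> (key \<Rightarrow> 'k::zero) \<Rightarrow> key \<Rightarrow> 'k" where
  "proj_deg d x = (\<lambda>b. if deg b = d then x b else 0)"

definition homogeneous_subspace :: "(key \<Rightarrow> 'k::field) set \<Rightarrow> bool" where
  "homogeneous_subspace I \<longleftrightarrow> (\<forall>x\<in>I. \<forall>d. proj_deg d x \<in> I)"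

definition bi_ideal :: "(key \<Rightarrow> 'k::field) set \<Rightarrow> bool" where
  "bi_ideal I \<longleftrightarrow>
     I \<subseteq> Wsp \<and>
     (\<forall>x\<in>I. \<forall>y\<in>Wsp. nabla (tens x y) \<in> I \<and> nabla (tens y x) \<in> I) \<and>
     (\<forall>x\<in>I. Delta x \<in> span_fun ({tens a b | a b. a \<in> I \<and> b \<in> Wsp} \<union>
                                   {tens a b | a b. a \<in> Wsp \<and> b \<in> I})) \<and>
     (\<forall>x\<in>I. eps x = 0)"

definition map_tens :: "(key \<Rightarrow> key \<Rightarrow> 'k::field) \<Rightarrow> (key \<Rightarrow> key \<Rightarrow> 'k)
    \<Rightarrow> (key \<times> key \<Rightarrow> 'k) \<Rightarrow> key \<times> key \<Rightarrow> 'k" where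
  "map_tens S T z = lin (\<lambda>(a, b). tens (S a) (T b)) z"

text \<open>The quotient W/I is a graded Hopf algebra: there is a linear, degree
preserving map S on W (given on the basis) with S(I) \<subseteq> I that induces an
antipode on W/I, i.e. the antipode identities hold modulo I.\<close>
definition quotient_graded_hopf :: "(key \<Rightarrow> 'k::field) set \<Rightarrow> bool" where
  "quotient_graded_hopf I \<longleftrightarrow>
     (\<exists>S :: key \<Rightarrow> key \<Rightarrow> 'k.
        (\<forall>b\<in>Wbasis. S b \<in> Wsp \<and> (\<forall>c\<in>supp (S b). deg c = deg b)) \<and>
        (\<forall>x\<in>I. lin S x \<in> I) \<and>
        (\<forall>x\<in>Wsp. nabla (map_tens S delta (Delta x)) - iota (eps x) \<in> I \<and>
                  nabla (map_tens delta S (Delta x)) - iota (eps x) \<in> I))"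

end

theory Submission
  imports Defs
begin


lemma sum_fun_apply: "(sum f A) x = (\<Sum>a\<in>A. f a x)"
  by (induction A rule: infinite_finite_induct) auto

lemma sum_mset_fun_apply: "(sum_mset (image_mset f M)) x = (\<Sum>a\<in>#M. f a x)"
  by (induction M) auto

lemma smul_apply[simp]: "smul c f x = c * f x" by (simp add: smul_def)
lemma delta_apply: "delta b c = (if c = b then 1 else 0)" by (simp add: delta_def)
lemma tens_apply[simp]: "tens x y (a,b) = x a * y b" by (simp add: tens_def)

lemma supp_iff[simp]: "c \<in> supp f \<longleftrightarrow> f c \<noteq> 0" by (simp add: supp_def)

lemma supp_delta[simp]: "supp (delta b :: _ \<Rightarrow> 'k::zero_neq_one) = {b}"
  by (auto simp: supp_def delta_def)

lemma supp_add: "supp (x + y) \<subseteq> supp x \<union> supp (y :: _ \<Rightarrow> 'k::monoid_add)"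
  by (auto simp: supp_def)
lemma supp_diff: "supp (x - y) \<subseteq> supp x \<union> supp (y :: _ \<Rightarrow> 'k::group_add)"
  by (auto simp: supp_def)
lemma supp_uminus[simp]: "supp (- x) = supp (x :: _ \<Rightarrow> 'k::group_add)"
  by (auto simp: supp_def)
lemma supp_smul: "supp (smul c x) \<subseteq> supp (x :: _ \<Rightarrow> 'k::mult_zero)"
  by (auto simp: supp_def)
lemma supp_zero[simp]: "supp (0 :: _ \<Rightarrow> 'k::zero) = {}"
  by (auto simp: supp_def)
lemma supp_sum: "supp (sum f A) \<subseteq> (\<Union>a\<in>A. supp (f a :: _ \<Rightarrow> 'k::comm_monoid_add))"
  by (auto simp: supp_def sum_fun_apply intro: ccontr dest: sum.neutral)
lemma supp_tens: "supp (tens x y) \<subseteq> supp x \<times> supp (y :: _ \<Rightarrow> 'k::mult_zero)"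
  by (auto simp: supp_def)

lemma fin_add: "finite (supp x) \<Longrightarrow> finite (supp y) \<Longrightarrow> finite (supp (x + y :: _ \<Rightarrow> 'k::monoid_add))"
  by (rule finite_subset[OF supp_add]) simp
lemma fin_diff: "finite (supp x) \<Longrightarrow> finite (supp y) \<Longrightarrow> finite (supp (x - y :: _ \<Rightarrow> 'k::group_add))"
  by (rule finite_subset[OF supp_diff]) simp
lemma fin_smul: "finite (supp x) \<Longrightarrow> finite (supp (smul c x :: _ \<Rightarrow> 'k::mult_zero))"
  by (rule finite_subset[OF supp_smul])
lemma fin_sum: "(\<And>a. a \<in> A \<Longrightarrow> finite (supp (f a))) \<Longrightarrow> finite (supp (sum f A :: _ \<Rightarrow> 'k::comm_monoid_add))"
  by (induction A rule: infinite_finite_induct) (auto intro: fin_add)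
lemma fin_tens: "finite (supp x) \<Longrightarrow> finite (supp y) \<Longrightarrow> finite (supp (tens x y :: _ \<Rightarrow> 'k::mult_zero))"
  by (rule finite_subset[OF supp_tens]) simp
lemma fin_delta[simp]: "finite (supp (delta b :: _ \<Rightarrow> 'k::zero_neq_one))" by simp

lemma tens_add1: "tens (x + x') y = tens x y + tens x' (y :: _ \<Rightarrow> 'k::semiring)"
  by (auto simp: tens_def distrib_right fun_eq_iff)
lemma tens_add2: "tens x (y + y') = tens x y + tens x (y' :: _ \<Rightarrow> 'k::semiring)"
  by (auto simp: tens_def distrib_left fun_eq_iff)
lemma tens_diff1: "tens (x - x') y = tens x y - tens x' (y :: _ \<Rightarrow> 'k::ring)"
  by (auto simp: tens_def left_diff_distrib fun_eq_iff)
lemma tens_diff2: "tens x (y - y') = tens x y - tens x (y' :: _ \<Rightarrow> 'k::ring)"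
  by (auto simp: tens_def right_diff_distrib fun_eq_iff)
lemma tens_smul1: "tens (smul c x) y = smul c (tens x (y :: _ \<Rightarrow> 'k::comm_ring))"
  by (auto simp: tens_def fun_eq_iff ac_simps)
lemma tens_smul2: "tens x (smul c y) = smul c (tens x (y :: _ \<Rightarrow> 'k::comm_ring))"
  by (auto simp: tens_def fun_eq_iff ac_simps)
lemma tens_sum1: "tens (sum f A) y = (\<Sum>a\<in>A. tens (f a) (y :: _ \<Rightarrow> 'k::comm_ring))"
  by (auto simp: fun_eq_iff tens_def sum_fun_apply sum_distrib_right)
lemma tens_sum2: "tens x (sum f A) = (\<Sum>a\<in>A. tens x (f a :: _ \<Rightarrow> 'k::comm_ring))"
  by (auto simp: fun_eq_iff tens_def sum_fun_apply sum_distrib_left)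
lemma tens_delta: "tens (delta a) (delta b) = (delta (a,b) :: _ \<Rightarrow> 'k::comm_ring_1)"
  by (auto simp: tens_def delta_def fun_eq_iff)

lemma smul_add: "smul c (x + y) = smul c x + smul c (y :: _ \<Rightarrow> 'k::semiring)"
  by (auto simp: fun_eq_iff distrib_left)
lemma smul_diff: "smul c (x - y) = smul c x - smul c (y :: _ \<Rightarrow> 'k::ring)"
  by (auto simp: fun_eq_iff right_diff_distrib)
lemma smul_sum: "smul c (sum f A) = (\<Sum>a\<in>A. smul c (f a :: _ \<Rightarrow> 'k::semiring_0))"
  by (auto simp: fun_eq_iff sum_fun_apply sum_distrib_left)
lemma smul_smul: "smul c (smul d x) = smul (c * d) (x :: _ \<Rightarrow> 'k::semigroup_mult)"
  by (auto simp: fun_eq_iff mult.assoc)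
lemma smul_one[simp]: "smul 1 x = (x :: _ \<Rightarrow> 'k::monoid_mult)"
  by (auto simp: fun_eq_iff)
lemma smul_zero[simp]: "smul c 0 = (0 :: _ \<Rightarrow> 'k::mult_zero)"
  by (auto simp: fun_eq_iff)
lemma smul_zero2[simp]: "smul 0 x = (0 :: _ \<Rightarrow> 'k::mult_zero)"
  by (auto simp: fun_eq_iff)
lemma smul_neg: "smul (- c) x = - smul c (x :: _ \<Rightarrow> 'k::ring)"
  by (auto simp: fun_eq_iff)

lemma lin_eq:
  assumes "finite A" "supp z \<subseteq> A"
  shows "lin F z = (\<Sum>b\<in>A. smul (z b) (F b))"
proof -
  have "\<And>c. (\<Sum>b\<in>supp z. z b * F b c) = (\<Sum>b\<in>A. z b * F b c)"
    by (rule sum.mono_neutral_left) (use assms in auto)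
  then show ?thesis by (auto simp: lin_def fun_eq_iff sum_fun_apply)
qed

lemma lin_eq': "finite (supp z) \<Longrightarrow> lin F z = (\<Sum>b\<in>supp z. smul (z b) (F b))"
  by (rule lin_eq) auto

lemma lin_add: "finite (supp x) \<Longrightarrow> finite (supp y) \<Longrightarrow> lin F (x + y) = lin F x + lin F (y :: _ \<Rightarrow> 'k::comm_ring)"
proof -
  assume a: "finite (supp x)" "finite (supp y)"
  let ?A = "supp x \<union> supp y"
  have "lin F (x+y) = (\<Sum>b\<in>?A. smul ((x+y) b) (F b))" by (rule lin_eq) (use a supp_add in auto)
  moreover have "lin F x = (\<Sum>b\<in>?A. smul (x b) (F b))" by (rule lin_eq) (use a in auto)
  moreover have "lin F y = (\<Sum>b\<in>?A. smul (y b) (F b))" by (rule lin_eq) (use a in auto)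
  ultimately show ?thesis by (simp add: sum.distrib[symmetric] fun_eq_iff sum_fun_apply distrib_right)
qed

lemma lin_smul: "finite (supp x) \<Longrightarrow> lin F (smul c x) = smul c (lin F (x :: _ \<Rightarrow> 'k::comm_ring))"
proof -
  assume a: "finite (supp x)"
  have "lin F (smul c x) = (\<Sum>b\<in>supp x. smul (smul c x b) (F b))" by (rule lin_eq) (use a supp_smul in auto)
  then show ?thesis using a by (simp add: lin_eq' smul_sum smul_smul)
qed

lemma lin_diff: "finite (supp x) \<Longrightarrow> finite (supp y) \<Longrightarrow> lin F (x - y) = lin F x - lin F (y :: _ \<Rightarrow> 'k::comm_ring)"
proof -
  assume a: "finite (supp x)" "finite (supp y)"
  let ?A = "supp x \<union> supp y"
  have "lin F (x-y) = (\<Sum>b\<in>?A. smul ((x-y) b) (F b))" by (rule lin_eq) (use a supp_diff in auto)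
  moreover have "lin F x = (\<Sum>b\<in>?A. smul (x b) (F b))" by (rule lin_eq) (use a in auto)
  moreover have "lin F y = (\<Sum>b\<in>?A. smul (y b) (F b))" by (rule lin_eq) (use a in auto)
  ultimately show ?thesis by (simp add: sum_subtractf[symmetric] fun_eq_iff sum_fun_apply left_diff_distrib)
qed

lemma lin_zero[simp]: "lin F 0 = (0 :: _ \<Rightarrow> 'k::comm_ring)"
  by (simp add: lin_def fun_eq_iff)

lemma lin_delta[simp]: "lin F (delta b) = (F b :: _ \<Rightarrow> 'k::comm_ring_1)"
  by (subst lin_eq[of "{b}"]) (auto simp: delta_def split: if_splits)

lemma lin_sum: "(\<And>a. a \<in> A \<Longrightarrow> finite (supp (f a))) \<Longrightarrow> lin F (sum f A) = (\<Sum>a\<in>A. lin F (f a :: _ \<Rightarrow> 'k::comm_ring))"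
  by (induction A rule: infinite_finite_induct) (auto simp: lin_add fin_sum)

lemma fin_lin: "finite (supp x) \<Longrightarrow> (\<And>b. b \<in> supp x \<Longrightarrow> finite (supp (F b))) \<Longrightarrow> finite (supp (lin F (x :: _ \<Rightarrow> 'k::comm_ring)))"
  by (simp add: lin_eq') (rule fin_sum, rule fin_smul, auto)

lemma expand: "finite (supp x) \<Longrightarrow> x = (\<Sum>b\<in>supp x. smul (x b) (delta b :: _ \<Rightarrow> 'k::comm_ring_1))"
proof -
  assume fin: "finite (supp x)"
  show ?thesis
  proof (rule ext)
    fix c
    have "(\<Sum>b\<in>supp x. smul (x b) (delta b)) c = (\<Sum>b\<in>supp x. smul (x b) (delta b) c)"
      by (rule sum_fun_apply)
    also have "\<dots> = (\<Sum>b\<in>supp x. if b = c then x c else 0)"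
      by (rule sum.cong) (auto simp: delta_def)
    also have "\<dots> = x c" using fin by (simp add: sum.delta)
    finally show "x c = (\<Sum>b\<in>supp x. smul (x b) (delta b)) c" by simp
  qed
qed

lemma smul_m1: "smul (-1) x = - (x :: _ \<Rightarrow> 'k::ring_1)"
  by (simp add: fun_eq_iff)

declare smul_apply[simp del]


lemma sum_smul_extend:
  assumes "finite C" "A \<subseteq> C"
  shows "(\<Sum>g\<in>A. smul (c g) g) = (\<Sum>g\<in>C. smul (if g \<in> A then c g else 0) (g :: _ \<Rightarrow> 'k::comm_ring))"
proof -
  have "(\<Sum>g\<in>C. smul (if g \<in> A then c g else 0) g) = (\<Sum>g\<in>C. if g \<in> A then smul (c g) g else 0)"
    by (rule sum.cong) auto
  also have "\<dots> = (\<Sum>g\<in>C \<inter> A. smul (c g) g)" using assms(1) by (simp add: sum.inter_restrict)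
  also have "C \<inter> A = A" using assms(2) by blast
  finally show ?thesis by simp
qed

lemma span_zero: "0 \<in> span_fun G"
  unfolding span_fun_def by (rule CollectI, rule exI[of _ "{}"]) auto

lemma span_base: "g \<in> G \<Longrightarrow> g \<in> span_fun G"
  unfolding span_fun_def by (rule CollectI, rule exI[of _ "{g}"], rule exI[of _ "\<lambda>_. 1"]) auto

lemma span_add:
  assumes "x \<in> span_fun G" "y \<in> span_fun G"
  shows "x + y \<in> span_fun G"
proof -
  obtain A c where A: "finite A" "A \<subseteq> G" "x = (\<Sum>g\<in>A. smul (c g) g)" using assms(1) unfolding span_fun_def by blast
  obtain B d where B: "finite B" "B \<subseteq> G" "y = (\<Sum>g\<in>B. smul (d g) g)" using assms(2) unfolding span_fun_def by blast
  let ?C = "A \<union> B"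
  have x: "x = (\<Sum>g\<in>?C. smul (if g \<in> A then c g else 0) g)" unfolding A(3)
    by (rule sum_smul_extend) (use A B in auto)
  have y: "y = (\<Sum>g\<in>?C. smul (if g \<in> B then d g else 0) g)" unfolding B(3)
    by (rule sum_smul_extend) (use A B in auto)
  have "x + y = (\<Sum>g\<in>?C. smul ((if g \<in> A then c g else 0) + (if g \<in> B then d g else 0)) g)"
    unfolding x y sum.distrib[symmetric] by (rule sum.cong) (auto simp: fun_eq_iff distrib_right smul_apply)
  then show ?thesis unfolding span_fun_def
    by (intro CollectI exI[of _ "A \<union> B"] exI[of _ "\<lambda>g. (if g \<in> A then c g else 0) + (if g \<in> B then d g else 0)"] conjI)
       (use A B in simp_all)
qed

lemma span_smul:
  assumes "x \<in> span_fun G"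
  shows "smul a x \<in> span_fun G"
proof -
  obtain A c where A: "finite A" "A \<subseteq> G" "x = (\<Sum>g\<in>A. smul (c g) g)" using assms(1) unfolding span_fun_def by blast
  have "smul a x = (\<Sum>g\<in>A. smul (a * c g) g)" unfolding A(3) smul_sum by (simp add: smul_smul)
  then show ?thesis unfolding span_fun_def
    by (intro CollectI exI[of _ A] exI[of _ "\<lambda>g. a * c g"] conjI) (use A in simp_all)
qed

lemma span_neg: "x \<in> span_fun G \<Longrightarrow> - x \<in> span_fun G"
  using span_smul[of x G "-1"] by (simp add: smul_m1)

lemma span_diff: "x \<in> span_fun G \<Longrightarrow> y \<in> span_fun G \<Longrightarrow> x - y \<in> span_fun G"
  using span_add[of x G "-y"] span_neg[of y G] by simp

lemma span_sum: "(\<And>a. a \<in> A \<Longrightarrow> f a \<in> span_fun G) \<Longrightarrow> sum f A \<in> span_fun G"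
  by (induction A rule: infinite_finite_induct) (auto intro: span_add span_zero)

lemma span_sum_mset: "(\<And>a. a \<in># M \<Longrightarrow> f a \<in> span_fun G) \<Longrightarrow> (\<Sum>a\<in>#M. f a) \<in> span_fun G"
  by (induction M) (auto intro: span_add span_zero)

lemma span_induct:
  assumes "x \<in> span_fun G" "Q 0"
    "\<And>c g y. g \<in> G \<Longrightarrow> y \<in> span_fun G \<Longrightarrow> Q y \<Longrightarrow> Q (smul c g + y)"
  shows "Q x"
proof -
  obtain A c where A: "finite A" "A \<subseteq> G" "x = (\<Sum>g\<in>A. smul (c g) g)" using assms(1) unfolding span_fun_def by blast
  have "(\<Sum>g\<in>A. smul (c g) g) \<in> span_fun G \<and> Q (\<Sum>g\<in>A. smul (c g) g)"
    using A(1,2)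
  proof (induction A rule: finite_induct)
    case empty show ?case by (simp only: sum.empty, rule conjI, rule span_zero, rule assms(2))
  next
    case (insert a A)
    then have "(\<Sum>g\<in>A. smul (c g) g) \<in> span_fun G \<and> Q (\<Sum>g\<in>A. smul (c g) g)" by blast
    moreover have "a \<in> G" using insert by blast
    moreover have "(\<Sum>g\<in>insert a A. smul (c g) g) = smul (c a) a + (\<Sum>g\<in>A. smul (c g) g)"
      by (rule sum.insert) (use insert in auto)
    ultimately show ?case
      by (simp only:) (blast intro: span_add span_smul span_base assms(3))
  qed
  then show ?thesis using A(3) by simp
qed

lemma span_mono: "G \<subseteq> H \<Longrightarrow> x \<in> span_fun G \<Longrightarrow> x \<in> span_fun H"
  unfolding span_fun_def by blast

lemma span_subset: "(\<And>g. g \<in> G \<Longrightarrow> g \<in> span_fun H) \<Longrightarrow> x \<in> span_fun G \<Longrightarrow> x \<in> span_fun H"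
proof (erule span_induct)
  show "0 \<in> span_fun H" by (rule span_zero)
next
  fix c g y assume "\<And>g. g \<in> G \<Longrightarrow> g \<in> span_fun H" "g \<in> G" "y \<in> span_fun H"
  then show "smul c g + y \<in> span_fun H" by (intro span_add span_smul) auto
qed

lemma Wsp_iff: "x \<in> Wsp \<longleftrightarrow> finite (supp x) \<and> supp x \<subseteq> Wbasis"
  by (simp add: Wsp_def)

lemma Wsp_add: "x \<in> Wsp \<Longrightarrow> y \<in> Wsp \<Longrightarrow> x + y \<in> Wsp"
  unfolding Wsp_iff using supp_add[of x y] fin_add[of x y] by blast
lemma Wsp_diff: "x \<in> Wsp \<Longrightarrow> y \<in> Wsp \<Longrightarrow> x - y \<in> Wsp"
  unfolding Wsp_iff using supp_diff[of x y] fin_diff[of x y] by blast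
lemma Wsp_smul: "x \<in> Wsp \<Longrightarrow> smul c x \<in> Wsp"
  unfolding Wsp_iff using supp_smul[of c x] fin_smul[of x c] by blast
lemma Wsp_zero: "0 \<in> Wsp"
  unfolding Wsp_iff by simp
lemma Wsp_delta: "b \<in> Wbasis \<Longrightarrow> delta b \<in> Wsp"
  unfolding Wsp_iff by simp
lemma Wsp_sum: "(\<And>a. a \<in> A \<Longrightarrow> f a \<in> Wsp) \<Longrightarrow> sum f A \<in> Wsp"
  by (induction A rule: infinite_finite_induct) (auto intro: Wsp_add Wsp_zero)
lemma Wsp_fin: "x \<in> Wsp \<Longrightarrow> finite (supp x)"
  unfolding Wsp_iff by simp

lemma Wbasis_iff: "(w, n) \<in> Wbasis \<longleftrightarrow> (\<forall>a\<in>set w. 0 < a \<and> a \<le> n)"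
  by (simp add: Wbasis_def)

definition Gen :: "(key \<Rightarrow> 'k::field) set" where
  "Gen = {delta (v, m) - delta (w, n) | v m w n.
                    (v, m) \<in> Wbasis \<and> (w, n) \<in> Wbasis \<and> fl v = fl w}"

lemma I_P_Gen: "I_P = span_fun Gen" by (simp add: I_P_def Gen_def)

lemma gen_I: "(v, m) \<in> Wbasis \<Longrightarrow> (w, n) \<in> Wbasis \<Longrightarrow> fl v = fl w \<Longrightarrow> delta (v, m) - delta (w, n) \<in> I_P"
  unfolding I_P_Gen Gen_def by (rule span_base) blast

lemma I_add: "x \<in> I_P \<Longrightarrow> y \<in> I_P \<Longrightarrow> x + y \<in> I_P" unfolding I_P_Gen by (rule span_add)
lemma I_diff: "x \<in> I_P \<Longrightarrow> y \<in> I_P \<Longrightarrow> x - y \<in> I_P" unfolding I_P_Gen by (rule span_diff)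
lemma I_neg: "x \<in> I_P \<Longrightarrow> - x \<in> I_P" unfolding I_P_Gen by (rule span_neg)
lemma I_smul: "x \<in> I_P \<Longrightarrow> smul c x \<in> I_P" unfolding I_P_Gen by (rule span_smul)
lemma I_zero: "0 \<in> I_P" unfolding I_P_Gen by (rule span_zero)
lemma I_sum: "(\<And>a. a \<in> A \<Longrightarrow> f a \<in> I_P) \<Longrightarrow> sum f A \<in> I_P" unfolding I_P_Gen by (rule span_sum)
lemma I_sum_mset: "(\<And>a. a \<in># M \<Longrightarrow> f a \<in> I_P) \<Longrightarrow> (\<Sum>a\<in>#M. f a) \<in> I_P" unfolding I_P_Gen by (rule span_sum_mset)

lemma Gen_Wsp: "g \<in> Gen \<Longrightarrow> g \<in> Wsp"
  unfolding Gen_def by (auto intro: Wsp_diff Wsp_delta)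

lemma I_Wsp: "(x :: key \<Rightarrow> 'k::field) \<in> I_P \<Longrightarrow> x \<in> Wsp"
  unfolding I_P_Gen
proof (erule span_induct)
  show "0 \<in> Wsp" by (rule Wsp_zero)
next
  fix c :: 'k and g y :: "key \<Rightarrow> 'k" assume "g \<in> Gen" "y \<in> Wsp"
  then show "smul c g + y \<in> Wsp" by (blast intro: Wsp_add Wsp_smul Gen_Wsp)
qed


definition sim :: "(nat \<times> nat) list \<Rightarrow> bool" where
  "sim z \<longleftrightarrow> (\<forall>p\<in>set z. \<forall>q\<in>set z. (fst p \<le> fst q) = (snd p \<le> snd q))"

lemma sim_mono: "set z \<subseteq> set z' \<Longrightarrow> sim z' \<Longrightarrow> sim z"
  unfolding sim_def by blast

lemma fl_length[simp]: "length (fl v) = length v"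
  by (simp add: fl_def)

lemma fl_nth: "i < length v \<Longrightarrow> fl v ! i = card {b \<in> set v. b \<le> v ! i}"
  by (simp add: fl_def)

lemma card_le_iff:
  fixes a b :: nat
  assumes "finite S" "a \<in> S" "b \<in> S"
  shows "(a \<le> b) = (card {x\<in>S. x \<le> a} \<le> card {x\<in>S. x \<le> b})"
proof
  assume "a \<le> b"
  then show "card {x\<in>S. x \<le> a} \<le> card {x\<in>S. x \<le> b}"
    by (intro card_mono) (use assms in auto)
next
  assume c: "card {x\<in>S. x \<le> a} \<le> card {x\<in>S. x \<le> b}"
  show "a \<le> b"
  proof (rule ccontr)
    assume "\<not> a \<le> b"
    then have "{x\<in>S. x \<le> b} \<subset> {x\<in>S. x \<le> a}" using assms by auto
    then have "card {x\<in>S. x \<le> b} < card {x\<in>S. x \<le> a}"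
      by (rule psubset_card_mono[rotated]) (use assms in auto)
    then show False using c by simp
  qed
qed

lemma fl_sim:
  assumes "length v = length w" "fl v = fl w"
  shows "sim (zip v w)"
  unfolding sim_def
proof (intro ballI)
  fix p q assume "p \<in> set (zip v w)" "q \<in> set (zip v w)"
  then obtain i j where ij: "i < length v" "j < length v" "p = (v!i, w!i)" "q = (v!j, w!j)"
    using assms(1) by (auto simp: set_zip)
  have "(v!i \<le> v!j) = (fl v ! i \<le> fl v ! j)"
    using ij by (simp add: fl_nth card_le_iff)
  moreover have "(w!i \<le> w!j) = (fl w ! i \<le> fl w ! j)"
    using ij assms(1) by (simp add: fl_nth card_le_iff)
  ultimately show "(fst p \<le> fst q) = (snd p \<le> snd q)" using ij assms(2) by simp
qed

lemma card_image_eq: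
  assumes "\<And>j k. j \<in> J \<Longrightarrow> k \<in> J \<Longrightarrow> (f j = f k) = (g j = g k)"
  shows "card (f ` J) = card (g ` J)"
proof -
  define h where "h = (\<lambda>a. g (SOME j. j \<in> J \<and> f j = a))"
  have hf: "h (f j) = g j" if "j \<in> J" for j
  proof -
    have "\<exists>k. k \<in> J \<and> f k = f j" using that by blast
    then have "(SOME k. k \<in> J \<and> f k = f j) \<in> J \<and> f (SOME k. k \<in> J \<and> f k = f j) = f j"
      by (rule someI_ex)
    then show ?thesis unfolding h_def using assms that by blast
  qed
  have "g ` J = h ` (f ` J)" using hf by (auto simp: image_image)
  moreover have "inj_on h (f ` J)"
    by (rule inj_onI) (use hf assms in auto)
  ultimately show ?thesis by (simp add: card_image)
qed

lemma sim_fl: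
  assumes "length v = length w" "sim (zip v w)"
  shows "fl v = fl w"
proof (rule nth_equalityI)
  show "length (fl v) = length (fl w)" using assms by simp
next
  fix i assume "i < length (fl v)"
  then have i: "i < length v" by simp
  have le: "(v!j \<le> v!k) = (w!j \<le> w!k)" if "j < length v" "k < length v" for j k
  proof -
    have "(v!j, w!j) \<in> set (zip v w)" "(v!k, w!k) \<in> set (zip v w)"
      using that assms(1) by (auto simp: set_zip)
    then show ?thesis using assms(2) unfolding sim_def by fastforce
  qed
  let ?J = "{j. j < length v \<and> v!j \<le> v!i}"
  have J2: "?J = {j. j < length v \<and> w!j \<le> w!i}" using le i by blast
  have sv: "{b \<in> set v. b \<le> v ! i} = (\<lambda>j. v!j) ` ?J" by (auto simp: in_set_conv_nth)
  have sw: "{b \<in> set w. b \<le> w ! i} = (\<lambda>j. w!j) ` ?J" unfolding J2 using assms(1) by (auto simp: in_set_conv_nth)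
  have "card ((\<lambda>j. v!j) ` ?J) = card ((\<lambda>j. w!j) ` ?J)"
  proof (rule card_image_eq)
    fix j k assume "j \<in> ?J" "k \<in> ?J"
    then have "j < length v" "k < length v" by auto
    then have "(v!j \<le> v!k) = (w!j \<le> w!k)" "(v!k \<le> v!j) = (w!k \<le> w!j)" using le by auto
    then show "(v!j = v!k) = (w!j = w!k)" by (simp add: order_eq_iff)
  qed
  then show "fl v ! i = fl w ! i" using i assms(1) sv sw by (simp add: fl_nth)
qed

lemma fl_eq_iff: "length v = length w \<Longrightarrow> fl v = fl w \<longleftrightarrow> sim (zip v w)"
  using fl_sim sim_fl by blast

lemma fl_len: "fl v = fl w \<Longrightarrow> length v = length w"
  by (metis fl_length)

lemma fl_take: "fl v = fl w \<Longrightarrow> fl (take i v) = fl (take i w)"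
proof -
  assume a: "fl v = fl w"
  then have l: "length v = length w" by (rule fl_len)
  then have "sim (zip v w)" using a fl_sim by blast
  moreover have "set (zip (take i v) (take i w)) \<subseteq> set (zip v w)"
    by (metis set_take_subset take_zip)
  ultimately show ?thesis using l by (intro sim_fl) (auto intro: sim_mono)
qed

lemma fl_drop: "fl v = fl w \<Longrightarrow> fl (drop i v) = fl (drop i w)"
proof -
  assume a: "fl v = fl w"
  then have l: "length v = length w" by (rule fl_len)
  then have "sim (zip v w)" using a fl_sim by blast
  moreover have "set (zip (drop i v) (drop i w)) \<subseteq> set (zip v w)"
    by (metis set_drop_subset drop_zip)
  ultimately show ?thesis using l by (intro sim_fl) (auto intro: sim_mono)
qed

lemma shuf_Nil2[simp]: "shuf v [] = {#v#}"
  by (cases v) auto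

lemma shuf_map: "shuf (map f a) (map f b) = image_mset (map f) (shuf a b)"
  by (induction a b rule: shuf.induct) (auto simp: multiset.map_comp o_def)

lemma shuf_set: "t \<in># shuf a b \<Longrightarrow> set t = set a \<union> set b"
  by (induction a b arbitrary: t rule: shuf.induct) auto

lemma shuf_len: "t \<in># shuf a b \<Longrightarrow> length t = length a + length b"
  by (induction a b arbitrary: t rule: shuf.induct) auto

lemma sum_mset_image: "(\<Sum>s\<in>#image_mset f M. g s) = (\<Sum>t\<in>#M. g (f t))"
  by (induction M) auto

lemma sum_mset_diff_fun: "(\<Sum>t\<in>#M. f t) - (\<Sum>t\<in>#M. g t) = (\<Sum>t\<in>#M. f t - (g t :: 'a::ab_group_add))"
  by (induction M) (auto simp: algebra_simps)

lemma sum_delta_apply: "(\<Sum>s\<in>#M. delta (s, K)) (u, k) = (if k = K then of_nat (count M u) else (0::'k::comm_ring_1))"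
  by (induction M) (auto simp: delta_def)

lemma mu_b_eq: "mu_b ((v, m), (w, n)) = (\<Sum>s\<in>#shuf v (shift m w). delta (s, m + n))"
  by (auto simp: mu_b_def fun_eq_iff sum_delta_apply)


lemma shuf_pair:
  assumes len: "length v = length w" "length u1 = length u2"
    and sm: "sim (zip (v @ u1) (w @ u2))"
    and b1: "\<forall>a\<in>set v \<union> set u1. 0 < a \<and> a \<le> K"
    and b2: "\<forall>a\<in>set w \<union> set u2. 0 < a \<and> a \<le> K'"
  shows "(\<Sum>s\<in>#shuf v u1. delta (s, K)) - (\<Sum>s\<in>#shuf w u2. delta (s, K')) \<in> (I_P :: (key \<Rightarrow> 'k::field) set)"
proof -
  let ?T = "shuf (zip v w) (zip u1 u2)"
  have e1: "shuf v u1 = image_mset (map fst) ?T"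
    using shuf_map[of fst "zip v w" "zip u1 u2"] len by simp
  have e2: "shuf w u2 = image_mset (map snd) ?T"
    using shuf_map[of snd "zip v w" "zip u1 u2"] len by simp
  have "(\<Sum>s\<in>#shuf v u1. delta (s, K)) - (\<Sum>s\<in>#shuf w u2. delta (s, K'))
      = (\<Sum>t\<in>#?T. (delta (map fst t, K) - delta (map snd t, K') :: key \<Rightarrow> 'k))"
    unfolding e1 e2 sum_mset_image sum_mset_diff_fun ..
  also have "\<dots> \<in> I_P"
  proof (rule I_sum_mset)
    fix t assume t: "t \<in># ?T"
    then have st: "set t = set (zip (v @ u1) (w @ u2))"
      using shuf_set[OF t] len by simp
    have "sim t" using sm st by (simp add: sim_def)
    then have f: "fl (map fst t) = fl (map snd t)"
      by (intro sim_fl) (simp_all add: zip_map_fst_snd)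
    have s1: "set (map fst t) \<subseteq> set v \<union> set u1"
    proof
      fix a assume "a \<in> set (map fst t)"
      then obtain b where "(a, b) \<in> set t" by auto
      then have "(a, b) \<in> set (zip (v @ u1) (w @ u2))" using st by simp
      then have "a \<in> set (v @ u1)" by (rule set_zip_leftD)
      then show "a \<in> set v \<union> set u1" by simp
    qed
    have s2: "set (map snd t) \<subseteq> set w \<union> set u2"
    proof
      fix b assume "b \<in> set (map snd t)"
      then obtain a where "(a, b) \<in> set t" by auto
      then have "(a, b) \<in> set (zip (v @ u1) (w @ u2))" using st by simp
      then have "b \<in> set (w @ u2)" by (rule set_zip_rightD)
      then show "b \<in> set w \<union> set u2" by simp
    qed
    show "delta (map fst t, K) - delta (map snd t, K') \<in> I_P"
      by (rule gen_I) (use f s1 s2 b1 b2 in \<open>auto simp: Wbasis_iff\<close>)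
  qed
  finally show ?thesis .
qed


definition pr :: "(key \<Rightarrow> 'k::field) \<Rightarrow> (key \<Rightarrow> 'k) \<Rightarrow> key \<Rightarrow> 'k" where
  "pr x y = nabla (tens x y)"

lemma pr_delta: "pr (delta a) (delta b) = (mu_b (a, b) :: key \<Rightarrow> 'k::field)"
  by (simp add: pr_def nabla_def tens_delta)

lemma mu_b_supp:
  assumes "c \<in> supp (mu_b ((v, m), (w, n)) :: key \<Rightarrow> 'k::field)"
  shows "\<exists>s. c = (s, m + n) \<and> s \<in># shuf v (shift m w)"
proof -
  obtain s k where c: "c = (s, k)" by (cases c)
  have "mu_b ((v, m), (w, n)) (s, k) \<noteq> (0::'k)" using assms c by simp
  then have k: "k = m + n" and "of_nat (count (shuf v (shift m w)) s) \<noteq> (0::'k)"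
    by (auto simp: mu_b_def split: if_splits)
  then have "count (shuf v (shift m w)) s \<noteq> 0" by (metis of_nat_0)
  then have "s \<in># shuf v (shift m w)" by (simp add: count_eq_zero_iff)
  then show ?thesis using c k by auto
qed

lemma fin_mu_b: "finite (supp (mu_b p :: key \<Rightarrow> 'k::field))"
proof -
  obtain v m w n where p: "p = ((v, m), (w, n))" by (metis prod.collapse)
  have "supp (mu_b p :: key \<Rightarrow> 'k) \<subseteq> (\<lambda>s. (s, m + n)) ` set_mset (shuf v (shift m w))"
    using mu_b_supp[where 'k='k] p by fastforce
  then show ?thesis by (rule finite_subset) simp
qed

lemma mu_b_Wbasis:
  assumes "(v, m) \<in> Wbasis" "(w, n) \<in> Wbasis"
  shows "supp (mu_b ((v, m), (w, n)) :: key \<Rightarrow> 'k::field) \<subseteq> Wbasis \<inter> {c. deg c = length v + length w}"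
proof
  fix c assume "c \<in> supp (mu_b ((v, m), (w, n)) :: key \<Rightarrow> 'k)"
  then obtain s where s: "c = (s, m + n)" "s \<in># shuf v (shift m w)" using mu_b_supp by blast
  have "set s = set v \<union> set (shift m w)" using shuf_set[OF s(2)] .
  then have "\<forall>a\<in>set s. 0 < a \<and> a \<le> m + n" using assms by (auto simp: Wbasis_iff shift_def)
  moreover have "length s = length v + length w" using shuf_len[OF s(2)] by (simp add: shift_def)
  ultimately show "c \<in> Wbasis \<inter> {c. deg c = length v + length w}" using s by (simp add: Wbasis_iff deg_def)
qed

lemma pr_add1: "finite (supp x) \<Longrightarrow> finite (supp x') \<Longrightarrow> finite (supp y) \<Longrightarrow> pr (x + x') y = pr x y + pr x' (y :: key \<Rightarrow> 'k::field)"
  by (simp add: pr_def nabla_def tens_add1 lin_add fin_tens)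
lemma pr_add2: "finite (supp x) \<Longrightarrow> finite (supp y) \<Longrightarrow> finite (supp y') \<Longrightarrow> pr x (y + y') = pr x y + pr x (y' :: key \<Rightarrow> 'k::field)"
  by (simp add: pr_def nabla_def tens_add2 lin_add fin_tens)
lemma pr_diff1: "finite (supp x) \<Longrightarrow> finite (supp x') \<Longrightarrow> finite (supp y) \<Longrightarrow> pr (x - x') y = pr x y - pr x' (y :: key \<Rightarrow> 'k::field)"
  by (simp add: pr_def nabla_def tens_diff1 lin_diff fin_tens)
lemma pr_diff2: "finite (supp x) \<Longrightarrow> finite (supp y) \<Longrightarrow> finite (supp y') \<Longrightarrow> pr x (y - y') = pr x y - pr x (y' :: key \<Rightarrow> 'k::field)"
  by (simp add: pr_def nabla_def tens_diff2 lin_diff fin_tens)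
lemma pr_smul1: "finite (supp x) \<Longrightarrow> finite (supp y) \<Longrightarrow> pr (smul c x) y = smul c (pr x (y :: key \<Rightarrow> 'k::field))"
  by (simp add: pr_def nabla_def tens_smul1 lin_smul fin_tens)
lemma pr_smul2: "finite (supp x) \<Longrightarrow> finite (supp y) \<Longrightarrow> pr x (smul c y) = smul c (pr x (y :: key \<Rightarrow> 'k::field))"
  by (simp add: pr_def nabla_def tens_smul2 lin_smul fin_tens)
lemma pr_zero1[simp]: "pr 0 y = (0 :: key \<Rightarrow> 'k::field)"
proof -
  have "tens (0 :: key \<Rightarrow> 'k) y = 0" by (simp add: tens_def fun_eq_iff)
  then show ?thesis by (simp add: pr_def nabla_def)
qed
lemma pr_zero2[simp]: "pr x 0 = (0 :: key \<Rightarrow> 'k::field)"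
proof -
  have "tens x (0 :: key \<Rightarrow> 'k) = 0" by (simp add: tens_def fun_eq_iff)
  then show ?thesis by (simp add: pr_def nabla_def)
qed
lemma pr_sum1: "(\<And>a. a \<in> A \<Longrightarrow> finite (supp (f a))) \<Longrightarrow> finite (supp y) \<Longrightarrow> pr (sum f A) y = (\<Sum>a\<in>A. pr (f a) (y :: key \<Rightarrow> 'k::field))"
  by (simp add: pr_def nabla_def tens_sum1 lin_sum fin_tens)
lemma pr_sum2: "(\<And>a. a \<in> A \<Longrightarrow> finite (supp (f a))) \<Longrightarrow> finite (supp x) \<Longrightarrow> pr x (sum f A) = (\<Sum>a\<in>A. pr x (f a :: key \<Rightarrow> 'k::field))"
  by (simp add: pr_def nabla_def tens_sum2 lin_sum fin_tens)

lemma fin_pr: "finite (supp x) \<Longrightarrow> finite (supp y) \<Longrightarrow> finite (supp (pr x (y :: key \<Rightarrow> 'k::field)))"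
  unfolding pr_def nabla_def by (rule fin_lin) (auto intro: fin_tens fin_mu_b)

lemma pr_expand:
  assumes "finite (supp x)" "finite (supp y)"
  shows "pr x y = (\<Sum>a\<in>supp x. smul (x a) (\<Sum>b\<in>supp y. smul (y b) (mu_b (a, b) :: key \<Rightarrow> 'k::field)))"
proof -
  have "pr x y = pr (\<Sum>a\<in>supp x. smul (x a) (delta a)) y" using expand[OF assms(1)] by simp
  also have "\<dots> = (\<Sum>a\<in>supp x. smul (x a) (pr (delta a) y))"
    using assms by (simp add: pr_sum1 fin_smul pr_smul1)
  also have "\<dots> = (\<Sum>a\<in>supp x. smul (x a) (\<Sum>b\<in>supp y. smul (y b) (mu_b (a, b))))"
  proof (rule sum.cong[OF refl])
    fix a
    have "pr (delta a) y = pr (delta a) (\<Sum>b\<in>supp y. smul (y b) (delta b))" using expand[OF assms(2)] by simp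
    also have "\<dots> = (\<Sum>b\<in>supp y. smul (y b) (mu_b (a, b)))"
      using assms by (simp add: pr_sum2 fin_smul pr_smul2 pr_delta)
    finally show "smul (x a) (pr (delta a) y) = smul (x a) (\<Sum>b\<in>supp y. smul (y b) (mu_b (a, b)))" by simp
  qed
  finally show ?thesis .
qed

lemma pr_supp:
  assumes "finite (supp x)" "finite (supp y)"
  shows "supp (pr x y :: key \<Rightarrow> 'k::field) \<subseteq> (\<Union>a\<in>supp x. \<Union>b\<in>supp y. supp (mu_b (a, b) :: key \<Rightarrow> 'k))"
proof -
  have "supp (pr x y) \<subseteq> (\<Union>a\<in>supp x. supp (smul (x a) (\<Sum>b\<in>supp y. smul (y b) (mu_b (a, b) :: key \<Rightarrow> 'k))))"
    unfolding pr_expand[OF assms] by (rule supp_sum)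
  also have "\<dots> \<subseteq> (\<Union>a\<in>supp x. \<Union>b\<in>supp y. supp (mu_b (a, b) :: key \<Rightarrow> 'k))"
  proof (intro UN_mono order_refl)
    fix a
    have "supp (smul (x a) (\<Sum>b\<in>supp y. smul (y b) (mu_b (a, b) :: key \<Rightarrow> 'k)))
        \<subseteq> supp (\<Sum>b\<in>supp y. smul (y b) (mu_b (a, b) :: key \<Rightarrow> 'k))" by (rule supp_smul)
    also have "\<dots> \<subseteq> (\<Union>b\<in>supp y. supp (smul (y b) (mu_b (a, b) :: key \<Rightarrow> 'k)))" by (rule supp_sum)
    also have "\<dots> \<subseteq> (\<Union>b\<in>supp y. supp (mu_b (a, b) :: key \<Rightarrow> 'k))" by (intro UN_mono order_refl supp_smul)
    finally show "supp (smul (x a) (\<Sum>b\<in>supp y. smul (y b) (mu_b (a, b) :: key \<Rightarrow> 'k)))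
        \<subseteq> (\<Union>b\<in>supp y. supp (mu_b (a, b) :: key \<Rightarrow> 'k))" .
  qed
  finally show ?thesis .
qed

lemma pr_Wsp_deg:
  assumes "x \<in> Wsp" "y \<in> Wsp" "supp x \<subseteq> {c. deg c = d1}" "supp y \<subseteq> {c. deg c = d2}"
  shows "supp (pr x y :: key \<Rightarrow> 'k::field) \<subseteq> Wbasis \<inter> {c. deg c = d1 + d2}"
proof -
  have "supp (pr x y :: key \<Rightarrow> 'k) \<subseteq> (\<Union>a\<in>supp x. \<Union>b\<in>supp y. supp (mu_b (a, b) :: key \<Rightarrow> 'k))"
    using assms by (intro pr_supp) (auto simp: Wsp_iff)
  also have "\<dots> \<subseteq> Wbasis \<inter> {c. deg c = d1 + d2}"
  proof (intro UN_least)
    fix a b assume a: "a \<in> supp x" and b: "b \<in> supp y"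
    obtain v m where av: "a = (v, m)" by (cases a)
    obtain w n where bw: "b = (w, n)" by (cases b)
    have "a \<in> Wbasis" "b \<in> Wbasis" using a b assms by (auto simp: Wsp_iff)
    moreover have "length v = d1" "length w = d2" using a b assms av bw by (auto simp: deg_def)
    ultimately show "supp (mu_b (a, b) :: key \<Rightarrow> 'k) \<subseteq> Wbasis \<inter> {c. deg c = d1 + d2}"
      using mu_b_Wbasis[of v m w n] av bw by auto
  qed
  finally show ?thesis .
qed

lemma pr_Wsp: "x \<in> Wsp \<Longrightarrow> y \<in> Wsp \<Longrightarrow> pr x y \<in> (Wsp :: (key \<Rightarrow> 'k::field) set)"
proof -
  assume a: "x \<in> Wsp" "y \<in> Wsp"
  have "supp (pr x y :: key \<Rightarrow> 'k) \<subseteq> (\<Union>a\<in>supp x. \<Union>b\<in>supp y. supp (mu_b (a, b) :: key \<Rightarrow> 'k))"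
    using a by (intro pr_supp) (auto simp: Wsp_iff)
  also have "\<dots> \<subseteq> Wbasis"
  proof (intro UN_least)
    fix a b assume a': "a \<in> supp x" and b': "b \<in> supp y"
    obtain v m where av: "a = (v, m)" by (cases a)
    obtain w n where bw: "b = (w, n)" by (cases b)
    have "a \<in> Wbasis" "b \<in> Wbasis" using a' b' a by (auto simp: Wsp_iff)
    then show "supp (mu_b (a, b) :: key \<Rightarrow> 'k) \<subseteq> Wbasis"
      using mu_b_Wbasis[of v m w n] av bw by auto
  qed
  finally show ?thesis using a by (simp add: Wsp_iff fin_pr)
qed


lemma set_zip_shift: "set (zip (shift m u) (shift n u)) = (\<lambda>c. (c + m, c + n)) ` set u"
  by (induction u) (auto simp: shift_def)

lemma set_zip_same: "set (zip u u) = (\<lambda>c. (c, c)) ` set u"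
  by (induction u) auto

lemma set_zip_shift2: "length v = length w \<Longrightarrow> set (zip (shift k v) (shift k w)) = (\<lambda>p. (fst p + k, snd p + k)) ` set (zip v w)"
proof (induction v arbitrary: w)
  case Nil then show ?case by (simp add: shift_def)
next
  case (Cons a v) then show ?case by (cases w) (auto simp: shift_def)
qed

lemma zip_fst_le: "p \<in> set (zip v w) \<Longrightarrow> fst p \<in> set v"
  by (cases p) (auto dest: set_zip_leftD)
lemma zip_snd_le: "p \<in> set (zip v w) \<Longrightarrow> snd p \<in> set w"
  by (cases p) (auto dest: set_zip_rightD)

lemma sim_left:
  assumes "sim (zip v w)" "length v = length w" "\<forall>a\<in>set v. a \<le> m" "\<forall>b\<in>set w. b \<le> n" "\<forall>c\<in>set u. 0 < c"
  shows "sim (zip (v @ shift m u) (w @ shift n u))"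
proof -
  have z: "set (zip (v @ shift m u) (w @ shift n u)) = set (zip v w) \<union> (\<lambda>c. (c + m, c + n)) ` set u"
    using assms(2) by (simp add: set_zip_shift)
  have A: "fst p \<le> m \<and> snd p \<le> n" if "p \<in> set (zip v w)" for p
    using assms(3,4) zip_fst_le[OF that] zip_snd_le[OF that] by blast
  show ?thesis unfolding sim_def z
  proof (intro ballI)
    fix p q assume p: "p \<in> set (zip v w) \<union> (\<lambda>c. (c + m, c + n)) ` set u"
      and q: "q \<in> set (zip v w) \<union> (\<lambda>c. (c + m, c + n)) ` set u"
    show "(fst p \<le> fst q) = (snd p \<le> snd q)"
    proof (cases "p \<in> set (zip v w)")
      case pT: True
      show ?thesis
      proof (cases "q \<in> set (zip v w)")
        case True then show ?thesis using pT assms(1) unfolding sim_def by blast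
      next
        case False
        then obtain c where "c \<in> set u" "q = (c + m, c + n)" using q by blast
        then show ?thesis using A[OF pT] assms(5) by auto
      qed
    next
      case pF: False
      then obtain c where c: "c \<in> set u" "p = (c + m, c + n)" using p by blast
      show ?thesis
      proof (cases "q \<in> set (zip v w)")
        case True then show ?thesis using A[OF True] assms(5) c by auto
      next
        case False
        then obtain d where "d \<in> set u" "q = (d + m, d + n)" using q by blast
        then show ?thesis using c by auto
      qed
    qed
  qed
qed

lemma sim_right:
  assumes "sim (zip v w)" "length v = length w" "\<forall>a\<in>set v. 0 < a" "\<forall>b\<in>set w. 0 < b" "\<forall>c\<in>set u. c \<le> k"
  shows "sim (zip (u @ shift k v) (u @ shift k w))"
proof -
  have z: "set (zip (u @ shift k v) (u @ shift k w)) = (\<lambda>c. (c, c)) ` set u \<union> (\<lambda>p. (fst p + k, snd p + k)) ` set (zip v w)"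
    using assms(2) by (simp add: set_zip_shift2 set_zip_same)
  have A: "0 < fst p \<and> 0 < snd p" if "p \<in> set (zip v w)" for p
    using assms(3,4) zip_fst_le[OF that] zip_snd_le[OF that] by blast
  show ?thesis unfolding sim_def z
  proof (intro ballI)
    fix p q assume p: "p \<in> (\<lambda>c. (c, c)) ` set u \<union> (\<lambda>p. (fst p + k, snd p + k)) ` set (zip v w)"
      and q: "q \<in> (\<lambda>c. (c, c)) ` set u \<union> (\<lambda>p. (fst p + k, snd p + k)) ` set (zip v w)"
    show "(fst p \<le> fst q) = (snd p \<le> snd q)"
    proof (cases "p \<in> (\<lambda>c. (c, c)) ` set u")
      case pT: True
      then obtain c where c: "c \<in> set u" "p = (c, c)" by blast
      show ?thesis
      proof (cases "q \<in> (\<lambda>c. (c, c)) ` set u")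
        case True then show ?thesis using c by auto
      next
        case False
        then obtain r where "r \<in> set (zip v w)" "q = (fst r + k, snd r + k)" using q by blast
        then show ?thesis using A assms(5) c by fastforce
      qed
    next
      case pF: False
      then obtain r where r: "r \<in> set (zip v w)" "p = (fst r + k, snd r + k)" using p by blast
      show ?thesis
      proof (cases "q \<in> (\<lambda>c. (c, c)) ` set u")
        case True
        then obtain c where c: "c \<in> set u" "q = (c, c)" by blast
        then show ?thesis using A[OF r(1)] assms(5) r by auto
      next
        case False
        then obtain r' where r': "r' \<in> set (zip v w)" "q = (fst r' + k, snd r' + k)" using q by blast
        have "(fst r \<le> fst r') = (snd r \<le> snd r')" using assms(1) r(1) r'(1) unfolding sim_def by blast
        then show ?thesis using r r' by auto
      qed
    qed
  qed
qed

lemma ideal_left_basis: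
  assumes "(v, m) \<in> Wbasis" "(w, n) \<in> Wbasis" "fl v = fl w" "(u, k) \<in> Wbasis"
  shows "mu_b ((v, m), (u, k)) - mu_b ((w, n), (u, k)) \<in> (I_P :: (key \<Rightarrow> 'k::field) set)"
proof -
  have l: "length v = length w" using assms(3) by (rule fl_len)
  have s: "sim (zip (v @ shift m u) (w @ shift n u))"
    by (rule sim_left) (use assms l fl_sim in \<open>auto simp: Wbasis_iff\<close>)
  show ?thesis unfolding mu_b_eq
    by (rule shuf_pair) (use assms l s in \<open>auto simp: Wbasis_iff shift_def\<close>)
qed

lemma ideal_right_basis:
  assumes "(v, m) \<in> Wbasis" "(w, n) \<in> Wbasis" "fl v = fl w" "(u, k) \<in> Wbasis"
  shows "mu_b ((u, k), (v, m)) - mu_b ((u, k), (w, n)) \<in> (I_P :: (key \<Rightarrow> 'k::field) set)"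
proof -
  have l: "length v = length w" using assms(3) by (rule fl_len)
  have s: "sim (zip (u @ shift k v) (u @ shift k w))"
    by (rule sim_right) (use assms l fl_sim in \<open>auto simp: Wbasis_iff\<close>)
  show ?thesis unfolding mu_b_eq
    by (rule shuf_pair) (use assms l s in \<open>auto simp: Wbasis_iff shift_def\<close>)
qed

lemma Gen_E:
  assumes "g \<in> Gen"
  obtains v m w n where "g = delta (v, m) - delta (w, n)" "(v, m) \<in> Wbasis" "(w, n) \<in> Wbasis" "fl v = fl w"
  using assms unfolding Gen_def by blast

lemma span_Gen_Wsp: "x \<in> span_fun Gen \<Longrightarrow> (x :: key \<Rightarrow> 'k::field) \<in> Wsp"
  using I_Wsp unfolding I_P_Gen .

lemma ideal_left:
  assumes "x \<in> I_P" "y \<in> Wsp"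
  shows "pr x y \<in> (I_P :: (key \<Rightarrow> 'k::field) set)"
proof -
  have fy: "finite (supp y)" using assms(2) by (rule Wsp_fin)
  have gen: "pr g y \<in> I_P" if gG: "g \<in> (Gen :: (key \<Rightarrow> 'k) set)" for g
  proof -
    obtain v m w n where g: "g = delta (v, m) - delta (w, n)" "(v, m) \<in> Wbasis" "(w, n) \<in> Wbasis" "fl v = fl w"
      by (rule Gen_E[OF gG])
    have fg: "finite (supp g)" using Gen_Wsp[OF gG] by (rule Wsp_fin)
    have "pr g y = pr g (\<Sum>b\<in>supp y. smul (y b) (delta b))" using expand[OF fy] by simp
    also have "\<dots> = (\<Sum>b\<in>supp y. smul (y b) (pr g (delta b)))"
      using fg by (simp add: pr_sum2 fin_smul pr_smul2)
    also have "\<dots> \<in> I_P"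
    proof (rule I_sum, rule I_smul)
      fix b assume b: "b \<in> supp y"
      obtain u k where bu: "b = (u, k)" by (cases b)
      have "(u, k) \<in> Wbasis" using b bu assms(2) by (auto simp: Wsp_iff)
      then have "mu_b ((v, m), (u, k)) - mu_b ((w, n), (u, k)) \<in> (I_P :: (key \<Rightarrow> 'k) set)"
        using g by (intro ideal_left_basis) auto
      then show "pr g (delta b) \<in> I_P" using g(1) bu by (simp add: pr_diff1 pr_delta)
    qed
    finally show ?thesis .
  qed
  show ?thesis
  proof (rule span_induct[of x Gen "\<lambda>x. pr x y \<in> I_P"])
    show "x \<in> span_fun Gen" using assms(1) unfolding I_P_Gen .
    show "pr 0 y \<in> I_P" using I_zero by simp
  next
    fix c :: 'k and g y' :: "key \<Rightarrow> 'k" assume h: "g \<in> Gen" "y' \<in> span_fun Gen" "pr y' y \<in> (I_P :: (key \<Rightarrow> 'k) set)"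
    have fg: "finite (supp g)" using Gen_Wsp[OF h(1)] by (rule Wsp_fin)
    have fy': "finite (supp y')" using span_Gen_Wsp[OF h(2)] by (rule Wsp_fin)
    have "pr (smul c g + y') y = smul c (pr g y) + pr y' y"
      using fg fy' fy by (simp add: pr_add1 fin_smul pr_smul1)
    then show "pr (smul c g + y') y \<in> I_P" using gen[OF h(1)] h(3) I_smul I_add by metis
  qed
qed

lemma ideal_right:
  assumes "x \<in> I_P" "y \<in> Wsp"
  shows "pr y x \<in> (I_P :: (key \<Rightarrow> 'k::field) set)"
proof -
  have fy: "finite (supp y)" using assms(2) by (rule Wsp_fin)
  have gen: "pr y g \<in> I_P" if gG: "g \<in> (Gen :: (key \<Rightarrow> 'k) set)" for g
  proof -
    obtain v m w n where g: "g = delta (v, m) - delta (w, n)" "(v, m) \<in> Wbasis" "(w, n) \<in> Wbasis" "fl v = fl w"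
      by (rule Gen_E[OF gG])
    have fg: "finite (supp g)" using Gen_Wsp[OF gG] by (rule Wsp_fin)
    have "pr y g = pr (\<Sum>b\<in>supp y. smul (y b) (delta b)) g" using expand[OF fy] by simp
    also have "\<dots> = (\<Sum>b\<in>supp y. smul (y b) (pr (delta b) g))"
      using fg by (simp add: pr_sum1 fin_smul pr_smul1)
    also have "\<dots> \<in> I_P"
    proof (rule I_sum, rule I_smul)
      fix b assume b: "b \<in> supp y"
      obtain u k where bu: "b = (u, k)" by (cases b)
      have "(u, k) \<in> Wbasis" using b bu assms(2) by (auto simp: Wsp_iff)
      then have "mu_b ((u, k), (v, m)) - mu_b ((u, k), (w, n)) \<in> (I_P :: (key \<Rightarrow> 'k) set)"
        using g by (intro ideal_right_basis) auto
      then show "pr (delta b) g \<in> I_P" using g(1) bu by (simp add: pr_diff2 pr_delta)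
    qed
    finally show ?thesis .
  qed
  show ?thesis
  proof (rule span_induct[of x Gen "\<lambda>x. pr y x \<in> I_P"])
    show "x \<in> span_fun Gen" using assms(1) unfolding I_P_Gen .
    show "pr y 0 \<in> I_P" using I_zero by simp
  next
    fix c :: 'k and g y' :: "key \<Rightarrow> 'k" assume h: "g \<in> Gen" "y' \<in> span_fun Gen" "pr y y' \<in> (I_P :: (key \<Rightarrow> 'k) set)"
    have fg: "finite (supp g)" using Gen_Wsp[OF h(1)] by (rule Wsp_fin)
    have fy': "finite (supp y')" using span_Gen_Wsp[OF h(2)] by (rule Wsp_fin)
    have "pr y (smul c g + y') = smul c (pr y g) + pr y y'"
      using fg fy' fy by (simp add: pr_add2 fin_smul pr_smul2)
    then show "pr y (smul c g + y') \<in> I_P" using gen[OF h(1)] h(3) I_smul I_add by metis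
  qed
qed


lemma Delta_delta: "Delta (delta (v, m)) = (\<Sum>i\<le>length v. delta ((take i v, m), (drop i v, m)) :: key \<times> key \<Rightarrow> 'k::field)"
  by (simp add: Delta_def Delta_b_def)

definition HH :: "(key \<times> key \<Rightarrow> 'k::field) set" where
  "HH = {tens a b | a b. a \<in> I_P \<and> b \<in> Wsp} \<union> {tens a b | a b. a \<in> Wsp \<and> b \<in> I_P}"

lemma HH_delta:
  assumes "(v, m) \<in> Wbasis" "(w, n) \<in> Wbasis" "fl v = fl w" "(v', m) \<in> Wbasis" "(w', n) \<in> Wbasis" "fl v' = fl w'"
  shows "delta ((v, m), (v', m)) - delta ((w, n), (w', n)) \<in> span_fun (HH :: (key \<times> key \<Rightarrow> 'k::field) set)"
proof -
  let ?a = "(v, m)" and ?a' = "(w, n)" and ?b = "(v', m)" and ?b' = "(w', n)"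
  have e: "delta (?a, ?b) - delta (?a', ?b') =
      tens (delta ?a - delta ?a') (delta ?b) + tens (delta ?a') (delta ?b - delta ?b' :: key \<Rightarrow> 'k)"
    by (simp add: tens_diff1 tens_diff2 tens_delta)
  have "tens (delta ?a - delta ?a') (delta ?b :: key \<Rightarrow> 'k) \<in> HH"
    unfolding HH_def using gen_I[OF assms(1-3)] Wsp_delta[OF assms(4)] by blast
  moreover have "tens (delta ?a') (delta ?b - delta ?b' :: key \<Rightarrow> 'k) \<in> HH"
    unfolding HH_def using gen_I[OF assms(4-6)] Wsp_delta[OF assms(2)] by blast
  ultimately show ?thesis unfolding e by (intro span_add span_base)
qed

lemma Wbasis_take: "(v, m) \<in> Wbasis \<Longrightarrow> (take i v, m) \<in> Wbasis"
  by (auto simp: Wbasis_iff dest: in_set_takeD)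
lemma Wbasis_drop: "(v, m) \<in> Wbasis \<Longrightarrow> (drop i v, m) \<in> Wbasis"
  by (auto simp: Wbasis_iff dest: in_set_dropD)

lemma coideal_gen:
  assumes "g \<in> Gen"
  shows "Delta g \<in> span_fun (HH :: (key \<times> key \<Rightarrow> 'k::field) set)"
proof -
  obtain v m w n where g: "(g :: key \<Rightarrow> 'k) = delta (v, m) - delta (w, n)" "(v, m) \<in> Wbasis" "(w, n) \<in> Wbasis" "fl v = fl w"
    by (rule Gen_E[OF assms])
  have l: "length v = length w" using g(4) by (rule fl_len)
  have "Delta g = Delta (delta (v, m)) - Delta (delta (w, n) :: key \<Rightarrow> 'k)"
    unfolding g(1) Delta_def by (simp add: lin_diff)
  also have "\<dots> = (\<Sum>i\<le>length v. delta ((take i v, m), (drop i v, m)) - delta ((take i w, n), (drop i w, n)))"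
    unfolding Delta_delta l by (simp add: sum_subtractf)
  also have "\<dots> \<in> span_fun HH"
  proof (rule span_sum)
    fix i
    show "delta ((take i v, m), (drop i v, m)) - delta ((take i w, n), (drop i w, n)) \<in> span_fun (HH :: (key \<times> key \<Rightarrow> 'k) set)"
      by (rule HH_delta) (use g in \<open>auto intro: Wbasis_take Wbasis_drop fl_take fl_drop\<close>)
  qed
  finally show ?thesis .
qed

lemma coideal:
  assumes "x \<in> I_P"
  shows "Delta x \<in> span_fun (HH :: (key \<times> key \<Rightarrow> 'k::field) set)"
proof (rule span_induct[of x Gen "\<lambda>x. Delta x \<in> span_fun HH"])
  show "x \<in> span_fun Gen" using assms unfolding I_P_Gen .
  show "Delta 0 \<in> span_fun (HH :: (key \<times> key \<Rightarrow> 'k) set)" by (simp add: Delta_def span_zero)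
next
  fix c :: 'k and g y :: "key \<Rightarrow> 'k" assume h: "g \<in> Gen" "y \<in> span_fun Gen" "Delta y \<in> span_fun HH"
  have fg: "finite (supp g)" using Gen_Wsp[OF h(1)] by (rule Wsp_fin)
  have fy: "finite (supp y)" using span_Gen_Wsp[OF h(2)] by (rule Wsp_fin)
  have "Delta (smul c g + y) = smul c (Delta g) + Delta y"
    using fg fy by (simp add: Delta_def lin_add fin_smul lin_smul)
  then show "Delta (smul c g + y) \<in> span_fun HH"
    using coideal_gen[OF h(1)] h(3) by (metis span_add span_smul)
qed

definition hb :: "key \<Rightarrow> 'k::field" where "hb b = (if fst b = [] then 1 else 0)"

lemma eps_eq:
  assumes "finite A" "supp x \<subseteq> A"
  shows "eps x = (\<Sum>b\<in>A. x b * hb b)"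
  unfolding eps_def hb_def by (rule sum.mono_neutral_left) (use assms in auto)

lemma eps_add: "finite (supp x) \<Longrightarrow> finite (supp y) \<Longrightarrow> eps (x + y) = eps x + eps y"
proof -
  assume a: "finite (supp x)" "finite (supp y)"
  let ?A = "supp x \<union> supp y"
  have "eps (x + y) = (\<Sum>b\<in>?A. (x + y) b * hb b)" by (rule eps_eq) (use a supp_add in auto)
  moreover have "eps x = (\<Sum>b\<in>?A. x b * hb b)" by (rule eps_eq) (use a in auto)
  moreover have "eps y = (\<Sum>b\<in>?A. y b * hb b)" by (rule eps_eq) (use a in auto)
  ultimately show ?thesis by (simp add: sum.distrib[symmetric] distrib_right)
qed

lemma eps_smul: "finite (supp x) \<Longrightarrow> eps (smul c x) = c * eps x"
proof -
  assume a: "finite (supp x)"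
  have "eps (smul c x) = (\<Sum>b\<in>supp x. smul c x b * hb b)" by (rule eps_eq) (use a supp_smul[of c x] in auto)
  moreover have "eps x = (\<Sum>b\<in>supp x. x b * hb b)" by (rule eps_eq) (use a in auto)
  ultimately show ?thesis by (simp add: sum_distrib_left smul_apply mult.assoc)
qed

lemma eps_diff: "finite (supp x) \<Longrightarrow> finite (supp y) \<Longrightarrow> eps (x - y) = eps x - eps y"
proof -
  assume a: "finite (supp x)" "finite (supp y)"
  let ?A = "supp x \<union> supp y"
  have "eps (x - y) = (\<Sum>b\<in>?A. (x - y) b * hb b)" by (rule eps_eq) (use a supp_diff in auto)
  moreover have "eps x = (\<Sum>b\<in>?A. x b * hb b)" by (rule eps_eq) (use a in auto)
  moreover have "eps y = (\<Sum>b\<in>?A. y b * hb b)" by (rule eps_eq) (use a in auto)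
  ultimately show ?thesis by (simp add: sum_subtractf[symmetric] left_diff_distrib)
qed

lemma eps_delta: "eps (delta b) = (hb b :: 'k::field)"
  by (subst eps_eq[of "{b}"]) (auto simp: delta_def split: if_splits)

lemma eps_zero: "eps 0 = 0" by (simp add: eps_def)

lemma eps_I:
  assumes "x \<in> I_P"
  shows "eps (x :: key \<Rightarrow> 'k::field) = 0"
proof (rule span_induct[of x Gen "\<lambda>x. eps x = 0"])
  show "x \<in> span_fun Gen" using assms unfolding I_P_Gen .
  show "eps (0 :: key \<Rightarrow> 'k) = 0" by (rule eps_zero)
next
  fix c :: 'k and g y :: "key \<Rightarrow> 'k" assume h: "g \<in> Gen" "y \<in> span_fun Gen" "eps y = 0"
  have fg: "finite (supp g)" using Gen_Wsp[OF h(1)] by (rule Wsp_fin)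
  have fy: "finite (supp y)" using span_Gen_Wsp[OF h(2)] by (rule Wsp_fin)
  obtain v m w n where g: "g = delta (v, m) - delta (w, n)" "(v, m) \<in> Wbasis" "(w, n) \<in> Wbasis" "fl v = fl w"
    by (rule Gen_E[OF h(1)])
  have l: "length v = length w" using g(4) by (rule fl_len)
  have "(v = []) = (w = [])" using l by auto
  then have "eps g = 0" unfolding g(1) by (simp add: eps_diff eps_delta hb_def)
  then show "eps (smul c g + y) = 0" using fg fy h(3) by (simp add: eps_add fin_smul eps_smul)
qed

lemma proj_I:
  assumes "x \<in> I_P"
  shows "proj_deg d (x :: key \<Rightarrow> 'k::field) \<in> I_P"
proof (rule span_induct[of x Gen "\<lambda>x. proj_deg d x \<in> I_P"])
  show "x \<in> span_fun Gen" using assms unfolding I_P_Gen .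
  have "proj_deg d (0 :: key \<Rightarrow> 'k) = 0" by (simp add: proj_deg_def fun_eq_iff)
  then show "proj_deg d (0 :: key \<Rightarrow> 'k) \<in> I_P" using I_zero by simp
next
  fix c :: 'k and g y :: "key \<Rightarrow> 'k" assume h: "g \<in> Gen" "y \<in> span_fun Gen" "proj_deg d y \<in> I_P"
  obtain v m w n where g: "g = delta (v, m) - delta (w, n)" "(v, m) \<in> Wbasis" "(w, n) \<in> Wbasis" "fl v = fl w"
    by (rule Gen_E[OF h(1)])
  have l: "length v = length w" using g(4) by (rule fl_len)
  have pg: "proj_deg d g \<in> I_P"
  proof (cases "length v = d")
    case True
    then have "proj_deg d g = g" unfolding g(1) using l by (auto simp: proj_deg_def fun_eq_iff delta_def deg_def)
    then show ?thesis using gen_I[OF g(2-4)] g(1) by simp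
  next
    case False
    then have "proj_deg d g = 0" unfolding g(1) using l by (auto simp: proj_deg_def fun_eq_iff delta_def deg_def)
    then show ?thesis using I_zero by simp
  qed
  have "proj_deg d (smul c g + y) = smul c (proj_deg d g) + proj_deg d y"
    by (simp add: proj_deg_def fun_eq_iff smul_apply)
  then show "proj_deg d (smul c g + y) \<in> I_P" using pg h(3) by (metis I_add I_smul)
qed

theorem part12: "homogeneous_subspace (I_P :: (key \<Rightarrow> 'k::field) set) \<and> bi_ideal (I_P :: (key \<Rightarrow> 'k) set)"
proof
  show "homogeneous_subspace (I_P :: (key \<Rightarrow> 'k::field) set)"
    unfolding homogeneous_subspace_def using proj_I by blast
  show "bi_ideal (I_P :: (key \<Rightarrow> 'k) set)"
    unfolding bi_ideal_def
  proof (intro conjI)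
    show "I_P \<subseteq> (Wsp :: (key \<Rightarrow> 'k) set)" using I_Wsp by blast
    show "\<forall>x\<in>(I_P :: (key \<Rightarrow> 'k) set). \<forall>y\<in>Wsp. nabla (tens x y) \<in> I_P \<and> nabla (tens y x) \<in> I_P"
      using ideal_left ideal_right unfolding pr_def by blast
    show "\<forall>x\<in>(I_P :: (key \<Rightarrow> 'k) set). Delta x \<in> span_fun ({tens a b | a b. a \<in> I_P \<and> b \<in> Wsp} \<union>
                                   {tens a b | a b. a \<in> Wsp \<and> b \<in> I_P})"
      using coideal unfolding HH_def by blast
    show "\<forall>x\<in>(I_P :: (key \<Rightarrow> 'k) set). eps x = 0" using eps_I by blast
  qed
qed


lemma image_mset_sum_mset: "image_mset f (\<Sum>s\<in>#M. g s) = (\<Sum>s\<in>#M. image_mset f (g s))"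
  by (induction M) auto

lemma sum_mset_add_distrib: "(\<Sum>s\<in>#M. f s + g s) = (\<Sum>s\<in>#M. f s) + (\<Sum>s\<in>#M. (g s :: 'a::comm_monoid_add))"
  by (induction M) (auto simp: ac_simps)

lemma sum_mset_id: "(\<Sum>s\<in>#M. {#s#}) = M"
  by (induction M) auto

lemma shuf_split:
  "(\<Sum>s\<in>#shuf (x # a) (y # b). F s) = (\<Sum>s\<in>#shuf a (y # b). F (x # s)) + (\<Sum>s\<in>#shuf (x # a) b. F (y # s))"
  by (simp add: sum_mset_image)

lemma shuf_assoc: "(\<Sum>s\<in>#shuf a b. shuf s c) = (\<Sum>s\<in>#shuf b c. shuf a s)"
proof (induction "length a + length b + length c" arbitrary: a b c rule: less_induct)
  case less
  show ?case
  proof (cases "a = [] \<or> b = [] \<or> c = []")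
    case True
    have e: "shuf [] = (\<lambda>s. {#s#})" by (rule ext) simp
    show ?thesis using True by (auto simp: sum_mset_id e)
  next
    case False
    then obtain x a' y b' z c' where abc: "a = x # a'" "b = y # b'" "c = z # c'"
      by (metis list.exhaust)
    have ih1: "(\<Sum>s\<in>#shuf a' b. shuf s c) = (\<Sum>s\<in>#shuf b c. shuf a' s)"
      by (rule less) (simp add: abc)
    have ih2: "(\<Sum>s\<in>#shuf a b'. shuf s c) = (\<Sum>s\<in>#shuf b' c. shuf a s)"
      by (rule less) (simp add: abc)
    have ih3: "(\<Sum>s\<in>#shuf a b. shuf s c') = (\<Sum>s\<in>#shuf b c'. shuf a s)"
      by (rule less) (simp add: abc)
    have L: "(\<Sum>s\<in>#shuf a b. shuf s c) =
       image_mset ((#) x) (\<Sum>s\<in>#shuf a' b. shuf s c) + image_mset ((#) y) (\<Sum>s\<in>#shuf a b'. shuf s c)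
       + image_mset ((#) z) (\<Sum>s\<in>#shuf a b. shuf s c')"
    proof -
      have "(\<Sum>s\<in>#shuf a b. shuf s c) = (\<Sum>s\<in>#shuf a' b. shuf (x # s) c) + (\<Sum>s\<in>#shuf a b'. shuf (y # s) c)"
        unfolding abc by (rule shuf_split)
      also have "\<dots> = (\<Sum>s\<in>#shuf a' b. image_mset ((#) x) (shuf s c) + image_mset ((#) z) (shuf (x # s) c'))
                    + (\<Sum>s\<in>#shuf a b'. image_mset ((#) y) (shuf s c) + image_mset ((#) z) (shuf (y # s) c'))"
        unfolding abc by simp
      also have "\<dots> = image_mset ((#) x) (\<Sum>s\<in>#shuf a' b. shuf s c) + image_mset ((#) y) (\<Sum>s\<in>#shuf a b'. shuf s c)
                    + image_mset ((#) z) ((\<Sum>s\<in>#shuf a' b. shuf (x # s) c') + (\<Sum>s\<in>#shuf a b'. shuf (y # s) c'))"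
        by (simp add: sum_mset_add_distrib image_mset_sum_mset ac_simps)
      also have "(\<Sum>s\<in>#shuf a' b. shuf (x # s) c') + (\<Sum>s\<in>#shuf a b'. shuf (y # s) c') = (\<Sum>s\<in>#shuf a b. shuf s c')"
        unfolding abc by (rule shuf_split[symmetric])
      finally show ?thesis .
    qed
    have R: "(\<Sum>s\<in>#shuf b c. shuf a s) =
       image_mset ((#) x) (\<Sum>s\<in>#shuf b c. shuf a' s) + image_mset ((#) y) (\<Sum>s\<in>#shuf b' c. shuf a s)
       + image_mset ((#) z) (\<Sum>s\<in>#shuf b c'. shuf a s)"
    proof -
      have "(\<Sum>s\<in>#shuf b c. shuf a s) = (\<Sum>s\<in>#shuf b' c. shuf a (y # s)) + (\<Sum>s\<in>#shuf b c'. shuf a (z # s))"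
        unfolding abc by (rule shuf_split)
      also have "\<dots> = (\<Sum>s\<in>#shuf b' c. image_mset ((#) x) (shuf a' (y # s)) + image_mset ((#) y) (shuf a s))
                    + (\<Sum>s\<in>#shuf b c'. image_mset ((#) x) (shuf a' (z # s)) + image_mset ((#) z) (shuf a s))"
        unfolding abc by simp
      also have "\<dots> = image_mset ((#) x) ((\<Sum>s\<in>#shuf b' c. shuf a' (y # s)) + (\<Sum>s\<in>#shuf b c'. shuf a' (z # s)))
                    + image_mset ((#) y) (\<Sum>s\<in>#shuf b' c. shuf a s) + image_mset ((#) z) (\<Sum>s\<in>#shuf b c'. shuf a s)"
        by (simp add: sum_mset_add_distrib image_mset_sum_mset ac_simps)
      also have "(\<Sum>s\<in>#shuf b' c. shuf a' (y # s)) + (\<Sum>s\<in>#shuf b c'. shuf a' (z # s)) = (\<Sum>s\<in>#shuf b c. shuf a' s)"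
        unfolding abc by (rule shuf_split[symmetric])
      finally show ?thesis .
    qed
    show ?thesis unfolding L R ih1 ih2 ih3 ..
  qed
qed

lemma sum_mset_bind: "(\<Sum>s\<in>#M. \<Sum>t\<in>#g s. f t) = (\<Sum>t\<in>#(\<Sum>s\<in>#M. g s). (f t :: 'a::comm_monoid_add))"
  by (induction M) auto

lemma shift_shift: "shift m (shift n w) = shift (m + n) w"
  by (simp add: shift_def ac_simps)

lemma shuf_shift: "shuf (shift m a) (shift m b) = image_mset (shift m) (shuf a b)"
  unfolding shift_def by (rule shuf_map)

lemma fin_sum_mset: "(\<And>a. finite (supp (f a))) \<Longrightarrow> finite (supp (\<Sum>a\<in>#M. (f a :: _ \<Rightarrow> 'k::comm_monoid_add)))"
  by (induction M) (auto intro: fin_add)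

lemma pr_sum_mset1: "(\<And>a. finite (supp (f a))) \<Longrightarrow> finite (supp y) \<Longrightarrow>
    pr (\<Sum>a\<in>#M. f a) y = (\<Sum>a\<in>#M. pr (f a) (y :: key \<Rightarrow> 'k::field))"
  by (induction M) (auto simp: pr_add1 fin_sum_mset)

lemma pr_sum_mset2: "(\<And>a. finite (supp (f a))) \<Longrightarrow> finite (supp x) \<Longrightarrow>
    pr x (\<Sum>a\<in>#M. f a) = (\<Sum>a\<in>#M. pr x (f a :: key \<Rightarrow> 'k::field))"
  by (induction M) (auto simp: pr_add2 fin_sum_mset)

lemma pr_assoc_basis:
  "pr (pr (delta a) (delta b)) (delta c) = pr (delta a) (pr (delta b) (delta c) :: key \<Rightarrow> 'k::field)"
proof -
  obtain u m where a: "a = (u, m)" by (cases a)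
  obtain v n where b: "b = (v, n)" by (cases b)
  obtain w k where c: "c = (w, k)" by (cases c)
  have "pr (pr (delta a) (delta b)) (delta c) = pr (\<Sum>s\<in>#shuf u (shift m v). delta (s, m + n)) (delta (w, k) :: key \<Rightarrow> 'k)"
    unfolding pr_delta a b c by (subst mu_b_eq) (rule refl)
  also have "\<dots> = (\<Sum>s\<in>#shuf u (shift m v). mu_b ((s, m + n), (w, k)) :: key \<Rightarrow> 'k)"
    by (simp add: pr_sum_mset1 pr_delta)
  also have "\<dots> = (\<Sum>s\<in>#shuf u (shift m v). \<Sum>t\<in>#shuf s (shift (m + n) w). delta (t, m + n + k))"
    by (subst mu_b_eq) (rule refl)
  also have "\<dots> = (\<Sum>t\<in>#(\<Sum>s\<in>#shuf u (shift m v). shuf s (shift (m + n) w)). delta (t, m + n + k))"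
    by (rule sum_mset_bind)
  also have "(\<Sum>s\<in>#shuf u (shift m v). shuf s (shift (m + n) w)) = (\<Sum>s\<in>#shuf (shift m v) (shift (m + n) w). shuf u s)"
    by (rule shuf_assoc)
  also have "\<dots> = (\<Sum>s\<in>#shuf v (shift n w). shuf u (shift m s))"
    by (simp add: shift_shift[symmetric] shuf_shift sum_mset_image)
  also have "(\<Sum>t\<in>#(\<Sum>s\<in>#shuf v (shift n w). shuf u (shift m s)). delta (t, m + n + k))
      = (\<Sum>s\<in>#shuf v (shift n w). \<Sum>t\<in>#shuf u (shift m s). delta (t, m + n + k) :: key \<Rightarrow> 'k)"
    by (rule sum_mset_bind[symmetric])
  also have "\<dots> = (\<Sum>s\<in>#shuf v (shift n w). mu_b ((u, m), (s, n + k)))"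
    by (simp add: mu_b_eq ac_simps)
  also have "\<dots> = pr (delta (u, m)) (\<Sum>s\<in>#shuf v (shift n w). delta (s, n + k))"
    by (simp add: pr_sum_mset2 pr_delta)
  also have "\<dots> = pr (delta a) (pr (delta b) (delta c))"
    unfolding pr_delta a b c by (subst (1) mu_b_eq) (rule refl)
  finally show ?thesis .
qed

lemma pr_assoc_mid:
  assumes "finite (supp y)"
  shows "pr (pr (delta a) y) (delta c) = pr (delta a) (pr y (delta c) :: key \<Rightarrow> 'k::field)"
proof -
  have fm: "finite (supp (mu_b p :: key \<Rightarrow> 'k))" for p by (rule fin_mu_b)
  have "pr (pr (delta a) y) (delta c) = pr (pr (delta a) (\<Sum>b\<in>supp y. smul (y b) (delta b))) (delta c)"
    using expand[OF assms] by simp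
  also have "\<dots> = (\<Sum>b\<in>supp y. smul (y b) (pr (pr (delta a) (delta b)) (delta c)))"
    by (simp add: pr_sum2 pr_sum1 fin_smul pr_smul2 pr_smul1 pr_delta fm fin_pr)
  also have "\<dots> = (\<Sum>b\<in>supp y. smul (y b) (pr (delta a) (pr (delta b) (delta c))))"
    by (simp add: pr_assoc_basis)
  also have "\<dots> = pr (delta a) (pr (\<Sum>b\<in>supp y. smul (y b) (delta b)) (delta c))"
    by (simp add: pr_sum2 pr_sum1 fin_smul pr_smul2 pr_smul1 pr_delta fm fin_pr fin_sum)
  also have "\<dots> = pr (delta a) (pr y (delta c))"
    using expand[OF assms] by simp
  finally show ?thesis .
qed


function Sa :: "key \<Rightarrow> key \<Rightarrow> 'k::field" where
  "Sa (w, n) = (if w = [] then delta ([], 0)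
     else - (\<Sum>i<length w. pr (Sa (take i w, n)) (delta (drop i w, n))))"
  by pat_completeness auto
termination by (relation "measure (\<lambda>b. length (fst b))") auto

declare Sa.simps[simp del]

lemma Sa_Nil: "Sa ([], n) = delta ([], 0)"
  by (subst Sa.simps) simp

lemma Sa_Cons: "w \<noteq> [] \<Longrightarrow> Sa (w, n) = - (\<Sum>i<length w. pr (Sa (take i w, n)) (delta (drop i w, n)))"
  by (subst Sa.simps) simp

lemma Sa_fin_aux: "finite (supp (Sa (w, n) :: key \<Rightarrow> 'k::field))"
proof (induction "length w" arbitrary: w rule: less_induct)
  case less
  show ?case
  proof (cases "w = []")
    case True then show ?thesis by (simp add: Sa_Nil)
  next
    case False
    have "finite (supp (\<Sum>i<length w. pr (Sa (take i w, n)) (delta (drop i w, n)) :: key \<Rightarrow> 'k))"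
    proof (rule fin_sum)
      fix i assume "i \<in> {..<length w}"
      then have "finite (supp (Sa (take i w, n) :: key \<Rightarrow> 'k))" by (intro less) auto
      then show "finite (supp (pr (Sa (take i w, n)) (delta (drop i w, n)) :: key \<Rightarrow> 'k))"
        by (intro fin_pr) auto
    qed
    then show ?thesis using False by (simp add: Sa_Cons)
  qed
qed

lemma Sa_fin: "finite (supp (Sa b :: key \<Rightarrow> 'k::field))"
  using Sa_fin_aux[of "fst b" "snd b"] by simp

lemma Wsp_neg: "x \<in> Wsp \<Longrightarrow> - x \<in> Wsp"
  using Wsp_smul[of x "-1"] by (simp add: smul_m1)

lemma Sa_Wsp:
  "(w, n) \<in> Wbasis \<Longrightarrow> Sa (w, n) \<in> (Wsp :: (key \<Rightarrow> 'k::field) set) \<and> supp (Sa (w, n) :: key \<Rightarrow> 'k) \<subseteq> {c. deg c = length w}"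
proof (induction "length w" arbitrary: w rule: less_induct)
  case less
  show ?case
  proof (cases "w = []")
    case True then show ?thesis by (simp add: Sa_Nil Wsp_delta Wbasis_iff deg_def)
  next
    case False
    let ?t = "\<lambda>i. pr (Sa (take i w, n)) (delta (drop i w, n)) :: key \<Rightarrow> 'k"
    have t: "?t i \<in> Wsp \<and> supp (?t i) \<subseteq> {c. deg c = length w}" if i: "i < length w" for i
    proof -
      have b1: "(take i w, n) \<in> Wbasis" "(drop i w, n) \<in> Wbasis"
        using less(2) by (auto intro: Wbasis_take Wbasis_drop)
      have ih: "Sa (take i w, n) \<in> (Wsp :: (key \<Rightarrow> 'k) set) \<and> supp (Sa (take i w, n) :: key \<Rightarrow> 'k) \<subseteq> {c. deg c = i}"
        using less(1)[of "take i w"] i b1 by auto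
      have d: "supp (delta (drop i w, n) :: key \<Rightarrow> 'k) \<subseteq> {c. deg c = length w - i}" by (simp add: deg_def)
      have "supp (?t i) \<subseteq> Wbasis \<inter> {c. deg c = i + (length w - i)}"
        by (rule pr_Wsp_deg) (use ih d b1 Wsp_delta in auto)
      moreover have "?t i \<in> Wsp" using ih b1 by (intro pr_Wsp Wsp_delta) auto
      ultimately show ?thesis using i by auto
    qed
    have "(\<Sum>i<length w. ?t i) \<in> Wsp" by (rule Wsp_sum) (use t in auto)
    moreover have "supp (\<Sum>i<length w. ?t i) \<subseteq> {c. deg c = length w}"
      using supp_sum[of ?t "{..<length w}"] t by blast
    ultimately show ?thesis using False by (simp add: Sa_Cons Wsp_neg)
  qed
qed

lemma Sa_fl:
  "(w, n) \<in> Wbasis \<Longrightarrow> (v, m) \<in> Wbasis \<Longrightarrow> fl w = fl v \<Longrightarrow> Sa (w, n) - Sa (v, m) \<in> (I_P :: (key \<Rightarrow> 'k::field) set)"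
proof (induction "length w" arbitrary: w v rule: less_induct)
  case less
  have l: "length w = length v" using less(4) by (rule fl_len)
  show ?case
  proof (cases "w = []")
    case True
    then have "v = []" using l by simp
    then show ?thesis using True I_zero by (simp add: Sa_Nil)
  next
    case False
    then have vF: "v \<noteq> []" using l by auto
    have tm: "pr (Sa (take i w, n)) (delta (drop i w, n)) - pr (Sa (take i v, m)) (delta (drop i v, m)) \<in> (I_P :: (key \<Rightarrow> 'k) set)"
      if i: "i < length w" for i
    proof -
      let ?A = "Sa (take i w, n) :: key \<Rightarrow> 'k" and ?A' = "Sa (take i v, m) :: key \<Rightarrow> 'k"
      let ?B = "delta (drop i w, n) :: key \<Rightarrow> 'k" and ?B' = "delta (drop i v, m) :: key \<Rightarrow> 'k"
      have b: "(take i w, n) \<in> Wbasis" "(take i v, m) \<in> Wbasis" "(drop i w, n) \<in> Wbasis" "(drop i v, m) \<in> Wbasis"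
        using less(2,3) by (auto intro: Wbasis_take Wbasis_drop)
      have ft: "fl (take i w) = fl (take i v)" by (rule fl_take[OF less(4)])
      have "length (take i w) < length w" using i by simp
      then have "?A - ?A' \<in> I_P" using b(1,2) ft by (rule less(1))
      then have 1: "pr (?A - ?A') ?B \<in> I_P" using b by (intro ideal_left Wsp_delta)
      have "?B - ?B' \<in> I_P" using gen_I[OF b(3,4)] fl_drop[OF less(4)] by blast
      then have 2: "pr ?A' (?B - ?B') \<in> I_P" using Sa_Wsp[OF b(2)] by (intro ideal_right) auto
      have "pr ?A ?B - pr ?A' ?B' = pr (?A - ?A') ?B + pr ?A' (?B - ?B')"
        by (simp add: pr_diff1 pr_diff2 Sa_fin)
      then show ?thesis using 1 2 I_add by metis
    qed
    have "Sa (w, n) - Sa (v, m) = - (\<Sum>i<length w. pr (Sa (take i w, n)) (delta (drop i w, n)) - pr (Sa (take i v, m)) (delta (drop i v, m)) :: key \<Rightarrow> 'k)"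
      using False vF l by (simp add: Sa_Cons sum_subtractf)
    also have "\<dots> \<in> I_P" using tm by (intro I_neg I_sum) auto
    finally show ?thesis .
  qed
qed

lemma lin_Sa_I:
  assumes "x \<in> I_P"
  shows "lin Sa (x :: key \<Rightarrow> 'k::field) \<in> I_P"
proof (rule span_induct[of x Gen "\<lambda>x. lin Sa x \<in> I_P"])
  show "x \<in> span_fun Gen" using assms unfolding I_P_Gen .
  show "lin Sa (0 :: key \<Rightarrow> 'k) \<in> I_P" using I_zero by simp
next
  fix c :: 'k and g y :: "key \<Rightarrow> 'k" assume h: "g \<in> Gen" "y \<in> span_fun Gen" "lin Sa y \<in> I_P"
  have fg: "finite (supp g)" using Gen_Wsp[OF h(1)] by (rule Wsp_fin)
  have fy: "finite (supp y)" using span_Gen_Wsp[OF h(2)] by (rule Wsp_fin)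
  obtain v m w n where g: "g = delta (v, m) - delta (w, n)" "(v, m) \<in> Wbasis" "(w, n) \<in> Wbasis" "fl v = fl w"
    by (rule Gen_E[OF h(1)])
  have "lin Sa g = Sa (v, m) - Sa (w, n)" unfolding g(1) by (simp add: lin_diff)
  then have "lin Sa g \<in> I_P" using Sa_fl[OF g(2-4)] by simp
  moreover have "lin Sa (smul c g + y) = smul c (lin Sa g) + lin Sa y"
    using fg fy by (simp add: lin_add fin_smul lin_smul)
  ultimately show "lin Sa (smul c g + y) \<in> I_P" using h(3) by (metis I_add I_smul)
qed


definition conv :: "(key \<Rightarrow> key \<Rightarrow> 'k::field) \<Rightarrow> (key \<Rightarrow> key \<Rightarrow> 'k) \<Rightarrow> key \<Rightarrow> key \<Rightarrow> 'k" where
  "conv F G b = (\<Sum>i\<le>length (fst b). pr (F (take i (fst b), snd b)) (G (drop i (fst b), snd b)))"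

lemma conv_eq: "conv F G (w, n) = (\<Sum>i\<le>length w. pr (F (take i w, n)) (G (drop i w, n)))"
  by (simp add: conv_def)

lemma lin_lincomb:
  "finite A \<Longrightarrow> (\<And>a. a \<in> A \<Longrightarrow> finite (supp (f a))) \<Longrightarrow>
   lin F (\<Sum>a\<in>A. smul (c a) (f a)) = (\<Sum>a\<in>A. smul (c a) (lin F (f a :: _ \<Rightarrow> 'k::comm_ring_1)))"
  by (simp add: lin_sum fin_smul lin_smul)

lemma fin_Delta_b: "finite (supp (Delta_b b :: key \<times> key \<Rightarrow> 'k::field))"
  unfolding Delta_b_def by (cases b) (auto intro: fin_sum)

lemma nabla_conv:
  assumes "\<And>b. finite (supp (F b))" "\<And>b. finite (supp (G b))"
  shows "nabla (map_tens F G (Delta (delta (w, n)))) = conv F G (w, n :: nat) "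
proof -
  have "map_tens F G (Delta (delta (w, n))) = (\<Sum>i\<le>length w. tens (F (take i w, n)) (G (drop i w, n)))"
    unfolding Delta_delta map_tens_def by (simp add: lin_sum)
  then show ?thesis
    unfolding conv_eq nabla_def pr_def by (simp add: lin_sum fin_tens assms)
qed

lemma smul_sum_scalar: "smul (\<Sum>a\<in>A. c a) v = (\<Sum>a\<in>A. smul (c a) (v :: _ \<Rightarrow> 'k::comm_ring))"
  by (simp add: fun_eq_iff sum_fun_apply smul_apply sum_distrib_right)

lemma reduce:
  assumes x: "x \<in> Wsp" and F: "\<And>b. finite (supp (F b))" and G: "\<And>b. finite (supp (G b))"
  shows "nabla (map_tens F G (Delta x)) - iota (eps x) = (\<Sum>b\<in>supp x. smul (x b) (conv F G b - iota (hb b)))"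
proof -
  have fx: "finite (supp x)" using x by (rule Wsp_fin)
  have fM: "finite (supp (map_tens F G (Delta_b b)))" for b
    unfolding map_tens_def by (rule fin_lin) (auto intro: fin_Delta_b fin_tens F G)
  have "Delta x = (\<Sum>b\<in>supp x. smul (x b) (Delta_b b))" unfolding Delta_def using fx by (rule lin_eq')
  then have "map_tens F G (Delta x) = (\<Sum>b\<in>supp x. smul (x b) (map_tens F G (Delta_b b)))"
    unfolding map_tens_def using fx by (simp add: lin_lincomb fin_Delta_b)
  then have "nabla (map_tens F G (Delta x)) = (\<Sum>b\<in>supp x. smul (x b) (nabla (map_tens F G (Delta_b b))))"
    unfolding nabla_def using fx by (simp add: lin_lincomb fM)
  also have "\<dots> = (\<Sum>b\<in>supp x. smul (x b) (conv F G b))"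
  proof (rule sum.cong[OF refl])
    fix b :: key
    obtain w n where b: "b = (w, n)" by (cases b)
    have "nabla (map_tens F G (Delta_b b)) = nabla (map_tens F G (Delta (delta (w, n))))"
      unfolding Delta_def b by simp
    also have "\<dots> = conv F G b" unfolding b by (rule nabla_conv[OF F G])
    finally show "smul (x b) (nabla (map_tens F G (Delta_b b))) = smul (x b) (conv F G b)" by simp
  qed
  finally have 1: "nabla (map_tens F G (Delta x)) = (\<Sum>b\<in>supp x. smul (x b) (conv F G b))" .
  have "eps x = (\<Sum>b\<in>supp x. x b * hb b)" by (rule eps_eq) (use fx in auto)
  then have 2: "iota (eps x) = (\<Sum>b\<in>supp x. smul (x b) (iota (hb b)))"
    by (simp add: iota_def smul_sum_scalar smul_smul)
  show ?thesis unfolding 1 2 by (simp add: sum_subtractf smul_diff)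
qed

lemma pr_unit_right: "pr (delta (u, k)) (delta ([], n)) = (delta (u, k + n) :: key \<Rightarrow> 'k::field)"
  by (simp add: pr_delta mu_b_eq shift_def)

lemma pr_unit_left: "pr (delta ([], 0)) (delta (w, n)) = (delta (w, n) :: key \<Rightarrow> 'k::field)"
  by (simp add: pr_delta mu_b_eq shift_def)

lemma pr_shift:
  assumes "x \<in> Wsp"
  shows "pr x (delta ([], n)) - x \<in> (I_P :: (key \<Rightarrow> 'k::field) set)"
proof -
  have fx: "finite (supp x)" using assms by (rule Wsp_fin)
  have "pr x (delta ([], n)) - x = pr (\<Sum>a\<in>supp x. smul (x a) (delta a)) (delta ([], n)) - (\<Sum>a\<in>supp x. smul (x a) (delta a))"
    using expand[OF fx] by simp
  also have "\<dots> = (\<Sum>a\<in>supp x. smul (x a) (pr (delta a) (delta ([], n)) - delta a))"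
    by (simp add: pr_sum1 fin_smul pr_smul1 sum_subtractf smul_diff)
  also have "\<dots> \<in> I_P"
  proof (rule I_sum, rule I_smul)
    fix a assume a: "a \<in> supp x"
    obtain u k where ak: "a = (u, k)" by (cases a)
    have "(u, k) \<in> Wbasis" using a ak assms by (auto simp: Wsp_iff)
    then have "(u, k + n) \<in> Wbasis" by (auto simp: Wbasis_iff)
    then show "pr (delta a) (delta ([], n)) - delta a \<in> (I_P :: (key \<Rightarrow> 'k) set)"
      unfolding ak pr_unit_right using \<open>(u, k) \<in> Wbasis\<close> by (intro gen_I) auto
  qed
  finally show ?thesis .
qed

lemma iota_hb: "iota (hb (w, n)) = (if w = [] then delta ([], 0) else (0 :: key \<Rightarrow> 'k::field))"
  by (simp add: iota_def hb_def)

lemma sum_atMost_last: "(\<Sum>i\<le>(L::nat). f i) = (\<Sum>i<L. f i) + (f L :: 'a::comm_monoid_add)"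
  using sum.lessThan_Suc[of f L] by (simp add: lessThan_Suc_atMost)

lemma left_identity:
  assumes "(w, n) \<in> Wbasis"
  shows "conv Sa delta (w, n) - iota (hb (w, n)) \<in> (I_P :: (key \<Rightarrow> 'k::field) set)"
proof (cases "w = []")
  case True
  have "conv Sa delta (w, n) - iota (hb (w, n)) = delta ([], n) - (delta ([], 0) :: key \<Rightarrow> 'k)"
    using True by (simp add: conv_eq Sa_Nil iota_hb pr_unit_left)
  also have "\<dots> \<in> I_P" by (rule gen_I) (auto simp: Wbasis_iff)
  finally show ?thesis .
next
  case False
  have "conv Sa delta (w, n) = (\<Sum>i<length w. pr (Sa (take i w, n)) (delta (drop i w, n))) + pr (Sa (w, n)) (delta ([], n) :: key \<Rightarrow> 'k)"
    unfolding conv_eq sum_atMost_last by simp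
  also have "\<dots> = pr (Sa (w, n)) (delta ([], n)) - Sa (w, n)"
    using False by (simp add: Sa_Cons)
  finally have "conv Sa delta (w, n) - iota (hb (w, n)) = pr (Sa (w, n)) (delta ([], n)) - (Sa (w, n) :: key \<Rightarrow> 'k)"
    using False by (simp add: iota_hb)
  also have "\<dots> \<in> I_P" using Sa_Wsp[OF assms] by (intro pr_shift) auto
  finally show ?thesis .
qed


lemma sum_swap_tri:
  "(\<Sum>j\<le>(L::nat). \<Sum>i\<le>j. f i j) = (\<Sum>i\<le>L. \<Sum>j\<in>{i..L}. (f i j :: 'a::comm_monoid_add))"
proof (induction L)
  case 0 then show ?case by simp
next
  case (Suc L)
  have "(\<Sum>i\<le>Suc L. \<Sum>j\<in>{i..Suc L}. f i j) = (\<Sum>i\<le>L. \<Sum>j\<in>{i..Suc L}. f i j) + f (Suc L) (Suc L)"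
    by simp
  also have "(\<Sum>i\<le>L. \<Sum>j\<in>{i..Suc L}. f i j) = (\<Sum>i\<le>L. (\<Sum>j\<in>{i..L}. f i j) + f i (Suc L))"
  proof (rule sum.cong[OF refl])
    fix i assume "i \<in> {..L}"
    then have "{i..Suc L} = insert (Suc L) {i..L}" by auto
    then show "(\<Sum>j\<in>{i..Suc L}. f i j) = (\<Sum>j\<in>{i..L}. f i j) + f i (Suc L)"
      by (simp add: add.commute)
  qed
  also have "\<dots> = (\<Sum>i\<le>L. \<Sum>j\<in>{i..L}. f i j) + (\<Sum>i\<le>L. f i (Suc L))" by (rule sum.distrib)
  finally show ?case using Suc by (simp add: ac_simps)
qed

lemma conv_T_delta:
  assumes "(w, n) \<in> Wbasis"
  shows "conv (conv delta Sa) delta (w, n) = (\<Sum>i\<le>length w. pr (delta (take i w, n)) (conv Sa delta (drop i w, n)) :: key \<Rightarrow> 'k::field)"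
proof -
  let ?L = "length w"
  let ?f = "\<lambda>i j. pr (delta (take i w, n)) (pr (Sa (drop i (take j w), n)) (delta (drop j w, n))) :: key \<Rightarrow> 'k"
  have fS: "finite (supp (Sa b :: key \<Rightarrow> 'k))" for b by (rule Sa_fin)
  have step: "pr (conv delta Sa (take j w, n)) (delta (drop j w, n)) = (\<Sum>i\<le>j. ?f i j)" if j: "j \<le> ?L" for j
  proof -
    have "conv delta Sa (take j w, n) = (\<Sum>i\<le>j. pr (delta (take i w, n)) (Sa (drop i (take j w), n)) :: key \<Rightarrow> 'k)"
      unfolding conv_eq using j by (intro sum.cong) (auto simp: min_def)
    then have "pr (conv delta Sa (take j w, n)) (delta (drop j w, n)) =
        (\<Sum>i\<le>j. pr (pr (delta (take i w, n)) (Sa (drop i (take j w), n))) (delta (drop j w, n)) :: key \<Rightarrow> 'k)"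
      by (simp add: pr_sum1 fin_pr fS)
    also have "\<dots> = (\<Sum>i\<le>j. ?f i j)" by (simp add: pr_assoc_mid fS)
    finally show ?thesis .
  qed
  have "conv (conv delta Sa) delta (w, n) = (\<Sum>j\<le>?L. pr (conv delta Sa (take j w, n)) (delta (drop j w, n)))"
    by (rule conv_eq)
  also have "\<dots> = (\<Sum>j\<le>?L. \<Sum>i\<le>j. ?f i j)"
    by (rule sum.cong[OF refl]) (simp add: step)
  also have "\<dots> = (\<Sum>i\<le>?L. \<Sum>j\<in>{i..?L}. ?f i j)" by (rule sum_swap_tri)
  also have "\<dots> = (\<Sum>i\<le>?L. pr (delta (take i w, n)) (conv Sa delta (drop i w, n)))"
  proof (rule sum.cong[OF refl])
    fix i assume i: "i \<in> {..?L}"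
    have "(\<Sum>j\<in>{i..?L}. pr (Sa (drop i (take j w), n)) (delta (drop j w, n)) :: key \<Rightarrow> 'k)
        = (\<Sum>k\<in>{0..?L - i}. pr (Sa (drop i (take (k + i) w), n)) (delta (drop (k + i) w, n)))"
      using sum.shift_bounds_cl_nat_ivl[of "\<lambda>j. pr (Sa (drop i (take j w), n)) (delta (drop j w, n)) :: key \<Rightarrow> 'k"
          0 i "?L - i"] i by simp
    also have "\<dots> = conv Sa delta (drop i w, n)"
      unfolding conv_eq by (rule sum.cong) (auto simp: take_drop atLeast0AtMost)
    finally have e: "(\<Sum>j\<in>{i..?L}. pr (Sa (drop i (take j w), n)) (delta (drop j w, n)) :: key \<Rightarrow> 'k) = conv Sa delta (drop i w, n)" .
    show "(\<Sum>j\<in>{i..?L}. ?f i j) = pr (delta (take i w, n)) (conv Sa delta (drop i w, n))"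
      unfolding e[symmetric] by (simp add: pr_sum2 fin_pr fS)
  qed
  finally show ?thesis .
qed

lemma fin_conv: "(\<And>b. finite (supp (F b))) \<Longrightarrow> (\<And>b. finite (supp (G b))) \<Longrightarrow> finite (supp (conv F G b :: key \<Rightarrow> 'k::field))"
  unfolding conv_def by (rule fin_sum) (rule fin_pr, auto)

lemma fin_iota: "finite (supp (iota c :: key \<Rightarrow> 'k::field))"
  unfolding iota_def by (rule fin_smul) simp

lemma conv_Wsp:
  assumes "(w, n) \<in> Wbasis"
  shows "conv delta Sa (w, n) \<in> (Wsp :: (key \<Rightarrow> 'k::field) set)"
  unfolding conv_eq
proof (rule Wsp_sum)
  fix i
  have "(take i w, n) \<in> Wbasis" "(drop i w, n) \<in> Wbasis" using assms by (auto intro: Wbasis_take Wbasis_drop)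
  then show "pr (delta (take i w, n)) (Sa (drop i w, n)) \<in> (Wsp :: (key \<Rightarrow> 'k) set)"
    using Sa_Wsp by (intro pr_Wsp Wsp_delta) auto
qed

lemma right_identity:
  "(w, n) \<in> Wbasis \<Longrightarrow> conv delta Sa (w, n) - iota (hb (w, n)) \<in> (I_P :: (key \<Rightarrow> 'k::field) set)"
proof (induction "length w" arbitrary: w rule: less_induct)
  case less
  let ?T = "conv delta Sa :: key \<Rightarrow> key \<Rightarrow> 'k"
  have fS: "finite (supp (Sa b :: key \<Rightarrow> 'k))" for b by (rule Sa_fin)
  show ?case
  proof (cases "w = []")
    case True
    have "?T (w, n) - iota (hb (w, n)) = delta ([], n) - delta ([], 0)"
      using True by (simp add: conv_eq Sa_Nil iota_hb pr_unit_right)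
    also have "\<dots> \<in> I_P" by (rule gen_I) (auto simp: Wbasis_iff)
    finally show ?thesis .
  next
    case False
    let ?L = "length w"
    have TW: "?T (w, n) \<in> Wsp" by (rule conv_Wsp[OF less(2)])
    have R1: "conv ?T delta (w, n) - delta (w, n) \<in> I_P"
    proof -
      let ?e = "\<lambda>i. iota (hb (drop i w, n)) :: key \<Rightarrow> 'k"
      have "(\<Sum>i\<le>?L. pr (delta (take i w, n)) (?e i)) = (\<Sum>i<?L. pr (delta (take i w, n)) (?e i)) + pr (delta (w, n)) (delta ([], 0))"
        unfolding sum_atMost_last by (simp add: iota_hb)
      also have "(\<Sum>i<?L. pr (delta (take i w, n)) (?e i)) = 0"
        by (rule sum.neutral) (auto simp: iota_hb)
      finally have u: "(\<Sum>i\<le>?L. pr (delta (take i w, n)) (?e i)) = delta (w, n)"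
        by (simp add: pr_delta mu_b_eq shift_def)
      have "conv ?T delta (w, n) - delta (w, n) = (\<Sum>i\<le>?L. pr (delta (take i w, n)) (conv Sa delta (drop i w, n) - ?e i))"
        unfolding conv_T_delta[OF less(2)] u[symmetric] sum_subtractf[symmetric]
      proof (rule sum.cong[OF refl])
        fix i
        have "finite (supp (conv Sa delta (drop i w, n) :: key \<Rightarrow> 'k))" by (rule fin_conv) (auto simp: fS)
        then show "pr (delta (take i w, n)) (conv Sa delta (drop i w, n)) - pr (delta (take i w, n)) (?e i) =
            pr (delta (take i w, n)) (conv Sa delta (drop i w, n) - ?e i)"
          by (intro pr_diff2[symmetric] fin_iota fin_delta)
      qed
      also have "\<dots> \<in> I_P"
      proof (rule I_sum)
        fix i
        have b: "(drop i w, n) \<in> Wbasis" "(take i w, n) \<in> Wbasis" using less(2) by (auto intro: Wbasis_take Wbasis_drop)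
        show "pr (delta (take i w, n)) (conv Sa delta (drop i w, n) - ?e i) \<in> I_P"
          using left_identity[OF b(1)] Wsp_delta[OF b(2)] by (rule ideal_right)
      qed
      finally show ?thesis .
    qed
    have R2: "(\<Sum>j<?L. pr (?T (take j w, n)) (delta (drop j w, n))) - delta (w, n) \<in> I_P"
    proof -
      obtain L' where L': "?L = Suc L'" using False by (cases w) auto
      have "(\<Sum>j<?L. pr (iota (hb (take j w, n))) (delta (drop j w, n)) :: key \<Rightarrow> 'k) =
          pr (iota (hb (take 0 w, n))) (delta (drop 0 w, n)) + (\<Sum>j<L'. pr (iota (hb (take (Suc j) w, n))) (delta (drop (Suc j) w, n)))"
        unfolding L' by (rule sum.lessThan_Suc_shift)
      also have "(\<Sum>j<L'. pr (iota (hb (take (Suc j) w, n))) (delta (drop (Suc j) w, n)) :: key \<Rightarrow> 'k) = 0"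
        by (rule sum.neutral) (use False in \<open>auto simp: iota_hb\<close>)
      finally have u: "(\<Sum>j<?L. pr (iota (hb (take j w, n))) (delta (drop j w, n)) :: key \<Rightarrow> 'k) = delta (w, n)"
        by (simp add: iota_hb pr_unit_left)
      have "(\<Sum>j<?L. pr (?T (take j w, n)) (delta (drop j w, n))) - delta (w, n)
          = (\<Sum>j<?L. pr (?T (take j w, n) - iota (hb (take j w, n))) (delta (drop j w, n)))"
        unfolding u[symmetric] sum_subtractf[symmetric]
      proof (rule sum.cong[OF refl])
        fix j
        have "finite (supp (?T (take j w, n)))" by (rule fin_conv) (auto simp: fS)
        then show "pr (?T (take j w, n)) (delta (drop j w, n)) - pr (iota (hb (take j w, n))) (delta (drop j w, n)) =
            pr (?T (take j w, n) - iota (hb (take j w, n))) (delta (drop j w, n))"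
          by (intro pr_diff1[symmetric] fin_iota fin_delta)
      qed
      also have "\<dots> \<in> I_P"
      proof (rule I_sum)
        fix j assume j: "j \<in> {..<?L}"
        have b: "(take j w, n) \<in> Wbasis" "(drop j w, n) \<in> Wbasis" using less(2) by (auto intro: Wbasis_take Wbasis_drop)
        have "?T (take j w, n) - iota (hb (take j w, n)) \<in> I_P"
          by (rule less(1)) (use j b in auto)
        then show "pr (?T (take j w, n) - iota (hb (take j w, n))) (delta (drop j w, n)) \<in> I_P"
          using Wsp_delta[OF b(2)] by (rule ideal_left)
      qed
      finally show ?thesis .
    qed
    have R3: "pr (?T (w, n)) (delta ([], n)) - ?T (w, n) \<in> I_P" using TW by (rule pr_shift)
    have split: "conv ?T delta (w, n) = (\<Sum>j<?L. pr (?T (take j w, n)) (delta (drop j w, n))) + pr (?T (w, n)) (delta ([], n))"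
      unfolding conv_eq sum_atMost_last by simp
    have eq: "?T (w, n) = (conv ?T delta (w, n) - delta (w, n))
        - ((\<Sum>j<?L. pr (?T (take j w, n)) (delta (drop j w, n))) - delta (w, n))
        - (pr (?T (w, n)) (delta ([], n)) - ?T (w, n))"
      unfolding split by (simp add: algebra_simps)
    have "?T (w, n) \<in> I_P" by (subst eq) (rule I_diff[OF I_diff[OF R1 R2] R3])
    then show ?thesis using False by (simp add: iota_hb)
  qed
qed


lemma part3a: "b \<in> Wbasis \<Longrightarrow> Sa b \<in> (Wsp :: (key \<Rightarrow> 'k::field) set) \<and> (\<forall>c\<in>supp (Sa b :: key \<Rightarrow> 'k). deg c = deg b)"
proof -
  assume b: "b \<in> Wbasis"
  obtain w n where bw: "b = (w, n)" by (cases b)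
  have "Sa (w, n) \<in> (Wsp :: (key \<Rightarrow> 'k) set) \<and> supp (Sa (w, n) :: key \<Rightarrow> 'k) \<subseteq> {c. deg c = length w}"
    using b bw by (intro Sa_Wsp) simp
  then show ?thesis using bw by (auto simp: deg_def)
qed

lemma part3c:
  assumes x: "(x :: key \<Rightarrow> 'k::field) \<in> Wsp"
  shows "nabla (map_tens Sa delta (Delta x)) - iota (eps x) \<in> I_P \<and> nabla (map_tens delta Sa (Delta x)) - iota (eps x) \<in> I_P"
proof
  have fS: "\<And>b. finite (supp (Sa b :: key \<Rightarrow> 'k))" by (rule Sa_fin)
  have fD: "\<And>b. finite (supp (delta b :: key \<Rightarrow> 'k))" by simp
  have bx: "b \<in> Wbasis" if "b \<in> supp x" for b using that x by (auto simp: Wsp_iff)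
  have "nabla (map_tens Sa delta (Delta x)) - iota (eps x) = (\<Sum>b\<in>supp x. smul (x b) (conv Sa delta b - iota (hb b)))"
    by (rule reduce[OF x fS fD])
  also have "\<dots> \<in> I_P"
  proof (rule I_sum, rule I_smul)
    fix b assume "b \<in> supp x"
    then have "b \<in> Wbasis" by (rule bx)
    moreover obtain w n where "b = (w, n)" by (cases b)
    ultimately show "conv Sa delta b - iota (hb b) \<in> (I_P :: (key \<Rightarrow> 'k) set)"
      using left_identity by simp
  qed
  finally show "nabla (map_tens Sa delta (Delta x)) - iota (eps x) \<in> I_P" .
  have "nabla (map_tens delta Sa (Delta x)) - iota (eps x) = (\<Sum>b\<in>supp x. smul (x b) (conv delta Sa b - iota (hb b)))"
    by (rule reduce[OF x fD fS])
  also have "\<dots> \<in> I_P"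
  proof (rule I_sum, rule I_smul)
    fix b assume "b \<in> supp x"
    then have "b \<in> Wbasis" by (rule bx)
    moreover obtain w n where "b = (w, n)" by (cases b)
    ultimately show "conv delta Sa b - iota (hb b) \<in> (I_P :: (key \<Rightarrow> 'k) set)"
      using right_identity by simp
  qed
  finally show "nabla (map_tens delta Sa (Delta x)) - iota (eps x) \<in> I_P" .
qed

lemma part3: "quotient_graded_hopf (I_P :: (key \<Rightarrow> 'k::field) set)"
  unfolding quotient_graded_hopf_def
  using part3a part3c lin_Sa_I by blast

theorem proposition3p7:
  shows "homogeneous_subspace (I_P :: (key \<Rightarrow> 'k::field) set) \<and> bi_ideal (I_P :: (key \<Rightarrow> 'k) set)
         \<and> quotient_graded_hopf (I_P :: (key \<Rightarrow> 'k) set)"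
  using part12 part3 by blast


end
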